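(* There exist universal constants $0<c\le C$ such that for all integers $n\ge k\ge 2$ and $r\ge 0$, \[ c\,k(\log_k n + r)\le \mathsf{opt}_{\operatorname{bandit}}^{\operatorname{adap}}(n,k,r)\le C\,k(\log_k n+r). \] Furthermore, for every constant $C_0>0$ there exist constants $0<c'\le C'$ depending only on $C_0$ such that whenever $n\ge k\ge 2$, $r\ge 0$ and $r\le C_0\log_k n$, \[ c'\,k\log_k n\le \mathsf{opt}_{\operatorname{bandit}}^{\operatorname{obl}}(n,k,r)\le C'\,k\log_k n. \]
   Context: Prediction with expert advice, $n$ experts, $k$ labels: let $\mathcal{Y}=\{1,\dots,k\}$, $\mathcal{X}=[k]^n$, and $\mathcal{U}_{n,k}=\{h_1,\dots,h_n\}$ with $h_i(x)=x_i$. For $r\ge0$ let $\mathcal{P}_r$ be the set of finite sequences $p$ of examples in $\mathcal{X}\times\mathcal{Y}$ such that some $h_i$ satisfies $h_i(x)\neq y$ for at most $r$ examples $(x,y)$ of $p$. Online learning with bandit feedback: in rounds $t=1,2,\dots$ the adversary presents $x_t$, the learner draws $\hat y_t$ from a distribution $\pi^{(t)}$ depending on past observations and $x_t$, and observes only whether $\hat y_t=y_t$ (true label); a mistake is $\hat y_t\ne y_t$. Oblivious: the adversary fixes $S\in\mathcal{P}_r$ in advance; $\mathsf{opt}_{\operatorname{bandit}}^{\operatorname{obl}}(n,k,r)=\inf_{\text{learner}}\sup_{S\in\mathcal{P}_r}$ expected mistakes. Adaptive: each round the adversary picks $x_t$ from the history, sees $\pi^{(t)}$, and picks a distribution $\tau^{(t)}$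 of $y_t$ ($\hat y_t\sim\pi^{(t)}$, $y_t\sim\tau^{(t)}$), subject to: whenever the history is realizable, every $y_t$ in the support of $\tau^{(t)}$ keeps it realizable, where a history of (instance, correct/incorrect, prediction) triples is realizable if some choice of true labels agreeing with all observations yields a sequence in $\mathcal{P}_r$ (i.e. some expert is inconsistent with the bandit feedback in at most $r$ rounds). $\mathsf{opt}_{\operatorname{bandit}}^{\operatorname{adap}}(n,k,r)=\inf_{\text{learner}}\sup_{\text{adversary}}$ expected mistakes. *)

theory Defs
  imports "HOL-Probability.Probability"
begin

text \<open>Labels are 1..k; an instance is a list of length n of labels (expert predictions);
  expert i (i < n) predicts x ! i. A history is a list of observations
  (instance, prediction was correct, prediction).\<close>

type_synonym inst = "nat list"
type_synonym hist = "(nat list \<times> bool \<times> nat) list"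

definition instances :: "nat \<Rightarrow> nat \<Rightarrow> inst set" where
  "instances n k = {x. length x = n \<and> set x \<subseteq> {1..k}}"

definition in_P :: "nat \<Rightarrow> nat \<Rightarrow> nat \<Rightarrow> (inst \<times> nat) list \<Rightarrow> bool" where
  "in_P n k r S \<longleftrightarrow>
     (\<forall>(x, y) \<in> set S. x \<in> instances n k \<and> y \<in> {1..k}) \<and>
     (\<exists>i<n. length (filter (\<lambda>(x, y). x ! i \<noteq> y) S) \<le> r)"

definition realizable :: "nat \<Rightarrow> nat \<Rightarrow> nat \<Rightarrow> hist \<Rightarrow> bool" where
  "realizable n k r h \<longleftrightarrow>
     (\<exists>ys. length ys = length h \<and>
        (\<forall>t<length h. (ys ! t = snd (snd (h ! t))) \<longleftrightarrow> fst (snd (h ! t))) \<and>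
        in_P n k r (zip (map fst h) ys))"

text \<open>Expected number of mistakes in T rounds starting from history h, for a learner L
  (history, instance \<mapsto> distribution of prediction) against an adversary given by an
  instance rule ax and a label-distribution rule lab (which sees the learner's distribution).\<close>
primrec game_val ::
  "(hist \<Rightarrow> inst \<Rightarrow> nat pmf) \<Rightarrow> (hist \<Rightarrow> inst) \<Rightarrow> (hist \<Rightarrow> nat pmf \<Rightarrow> nat pmf)
     \<Rightarrow> nat \<Rightarrow> hist \<Rightarrow> real" where
  "game_val L ax lab 0 h = 0"
| "game_val L ax lab (Suc T) h =
     (let x = ax h; \<pi> = L h x in
       measure_pmf.expectation (pair_pmf \<pi> (lab h \<pi>))
         (\<lambda>(yh, y). (if yh = y then 0 else 1) + game_val L ax lab T (h @ [(x, yh = y, yh)])))"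

definition valid_learner :: "nat \<Rightarrow> (hist \<Rightarrow> inst \<Rightarrow> nat pmf) \<Rightarrow> bool" where
  "valid_learner k L \<longleftrightarrow> (\<forall>h x. set_pmf (L h x) \<subseteq> {1..k})"

definition valid_adap_adv ::
  "nat \<Rightarrow> nat \<Rightarrow> nat \<Rightarrow> (hist \<Rightarrow> inst) \<Rightarrow> (hist \<Rightarrow> nat pmf \<Rightarrow> nat pmf) \<Rightarrow> bool" where
  "valid_adap_adv n k r ax lab \<longleftrightarrow>
     (\<forall>h \<pi>. ax h \<in> instances n k \<and> set_pmf (lab h \<pi>) \<subseteq> {1..k} \<and>
        (realizable n k r h \<longrightarrow>
          (\<forall>y \<in> set_pmf (lab h \<pi>). \<forall>yh \<in> {1..k}.
             realizable n k r (h @ [(ax h, yh = y, yh)]))))"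

definition opt_bandit_adap :: "nat \<Rightarrow> nat \<Rightarrow> nat \<Rightarrow> ereal" where
  "opt_bandit_adap n k r =
     (INF L \<in> {L. valid_learner k L}.
        SUP A \<in> {(ax, lab, T). valid_adap_adv n k r ax lab}.
          ereal (case A of (ax, lab, T) \<Rightarrow> game_val L ax lab T []))"

definition obl_val :: "(hist \<Rightarrow> inst \<Rightarrow> nat pmf) \<Rightarrow> (inst \<times> nat) list \<Rightarrow> real" where
  "obl_val L S = game_val L (\<lambda>h. fst (S ! length h)) (\<lambda>h \<pi>. return_pmf (snd (S ! length h)))
                   (length S) []"

definition opt_bandit_obl :: "nat \<Rightarrow> nat \<Rightarrow> nat \<Rightarrow> ereal" where
  "opt_bandit_obl n k r =
     (INF L \<in> {L. valid_learner k L}. SUP S \<in> {S. in_P n k r S}. ereal (obl_val L S))"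

end

theory Submission
  imports Defs
begin


definition charged :: "inst \<Rightarrow> bool \<Rightarrow> nat \<Rightarrow> nat \<Rightarrow> bool" where
  "charged x c yh i \<longleftrightarrow> (c \<and> x ! i \<noteq> yh) \<or> (\<not> c \<and> x ! i = yh)"

definition cnt :: "hist \<Rightarrow> nat \<Rightarrow> nat" where
  "cnt h i = length (filter (\<lambda>(x, c, yh). charged x c yh i) h)"

definition wfh :: "nat \<Rightarrow> nat \<Rightarrow> hist \<Rightarrow> bool" where
  "wfh n k h \<longleftrightarrow> (\<forall>(x, c, yh) \<in> set h. x \<in> instances n k \<and> (c \<longrightarrow> yh \<in> {1..k}))"

lemma cnt_Nil[simp]: "cnt [] i = 0" by (simp add: cnt_def)

lemma cnt_snoc[simp]: "cnt (h @ [(x, c, yh)]) i = cnt h i + (if charged x c yh i then 1 else 0)"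
  by (simp add: cnt_def)

lemma wfh_Nil[simp]: "wfh n k []" by (simp add: wfh_def)

lemma wfh_snoc[simp]: "wfh n k (h @ [(x, c, yh)]) \<longleftrightarrow> wfh n k h \<and> x \<in> instances n k \<and> (c \<longrightarrow> yh \<in> {1..k})"
  by (auto simp: wfh_def)

lemma cnt_card: "cnt h i = card {t. t < length h \<and> (case h ! t of (x, c, yh) \<Rightarrow> charged x c yh i)}"
  unfolding cnt_def by (simp add: length_filter_conv_card)

lemma realizable_imp:
  assumes "realizable n k r h"
  shows "wfh n k h \<and> (\<exists>i<n. cnt h i \<le> r)"
proof -
  obtain ys where len: "length ys = length h"
    and fb: "\<forall>t<length h. (ys ! t = snd (snd (h ! t))) \<longleftrightarrow> fst (snd (h ! t))"
    and P: "in_P n k r (zip (map fst h) ys)"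
    using assms unfolding realizable_def by blast
  let ?S = "zip (map fst h) ys"
  have inS: "\<And>t. t < length h \<Longrightarrow> (fst (h ! t), ys ! t) \<in> set ?S"
    by (metis (no_types, lifting) len length_map nth_map nth_mem nth_zip length_zip min.idem)
  from P have allS: "\<forall>(x, y)\<in>set ?S. x \<in> instances n k \<and> y \<in> {1..k}"
    and ex: "\<exists>i<n. length (filter (\<lambda>(x, y). x ! i \<noteq> y) ?S) \<le> r"
    unfolding in_P_def by auto
  have wf: "wfh n k h"
    unfolding wfh_def
  proof (intro ballI, clarify)
    fix x c yh assume "(x, c, yh) \<in> set h"
    then obtain t where t: "t < length h" "h ! t = (x, c, yh)" by (metis in_set_conv_nth)
    have "(fst (h ! t), ys ! t) \<in> set ?S" using inS t(1) .
    then have "x \<in> instances n k" "ys ! t \<in> {1..k}" using allS t(2) by auto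
    moreover have "c \<longrightarrow> ys ! t = yh" using fb t by auto
    ultimately show "x \<in> instances n k \<and> (c \<longrightarrow> yh \<in> {1..k})" by auto
  qed
  obtain i where i: "i < n" "length (filter (\<lambda>(x, y). x ! i \<noteq> y) ?S) \<le> r" using ex by blast
  have "cnt h i \<le> length (filter (\<lambda>(x, y). x ! i \<noteq> y) ?S)"
  proof -
    have "cnt h i = card {t. t < length h \<and> (case h ! t of (x, c, yh) \<Rightarrow> charged x c yh i)}"
      by (rule cnt_card)
    also have "\<dots> \<le> card {t. t < length ?S \<and> (case ?S ! t of (x, y) \<Rightarrow> x ! i \<noteq> y)}"
    proof (rule card_mono)
      show "finite {t. t < length ?S \<and> (case ?S ! t of (x, y) \<Rightarrow> x ! i \<noteq> y)}" by simp
      show "{t. t < length h \<and> (case h ! t of (x, c, yh) \<Rightarrow> charged x c yh i)}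
            \<subseteq> {t. t < length ?S \<and> (case ?S ! t of (x, y) \<Rightarrow> x ! i \<noteq> y)}"
      proof
        fix t assume "t \<in> {t. t < length h \<and> (case h ! t of (x, c, yh) \<Rightarrow> charged x c yh i)}"
        then have t: "t < length h" and ch: "case h ! t of (x, c, yh) \<Rightarrow> charged x c yh i" by auto
        obtain x c yh where ht: "h ! t = (x, c, yh)" by (cases "h ! t") auto
        have St: "?S ! t = (x, ys ! t)" using t len ht by simp
        have "(ys ! t = snd (snd (h ! t))) = fst (snd (h ! t))" using fb t by blast
        then have "(ys ! t = yh) \<longleftrightarrow> c" using ht by simp
        then have "x ! i \<noteq> ys ! t" using ch ht unfolding charged_def by auto
        then show "t \<in> {t. t < length ?S \<and> (case ?S ! t of (x, y) \<Rightarrow> x ! i \<noteq> y)}" using St t len by simp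
      qed
    qed
    also have "\<dots> = length (filter (\<lambda>(x, y). x ! i \<noteq> y) ?S)"
      by (simp add: length_filter_conv_card)
    finally show ?thesis .
  qed
  with i wf show ?thesis by auto
qed

definition altlab :: "inst \<Rightarrow> nat \<Rightarrow> bool \<Rightarrow> nat \<Rightarrow> nat" where
  "altlab x i c yh = (if c then yh else if x ! i \<noteq> yh then x ! i else (if yh = 1 then 2 else 1))"

lemma altlab_fb: "(altlab x i c yh = yh) \<longleftrightarrow> c"
  by (simp add: altlab_def)

lemma altlab_charged: "(x ! i \<noteq> altlab x i c yh) \<longleftrightarrow> charged x c yh i"
  by (auto simp: altlab_def charged_def)

lemma realizable_intro:
  assumes k: "2 \<le> k" and wf: "wfh n k h" and i: "i < n" "cnt h i \<le> r"
  shows "realizable n k r h"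
proof -
  define ys where "ys = map (\<lambda>(x, c, yh). altlab x i c yh) h"
  let ?S = "zip (map fst h) ys"
  have len: "length ys = length h" by (simp add: ys_def)
  have ysn: "\<And>t x c yh. t < length h \<Longrightarrow> h ! t = (x, c, yh) \<Longrightarrow> ys ! t = altlab x i c yh"
    by (simp add: ys_def)
  have Snth: "\<And>t x c yh. t < length h \<Longrightarrow> h ! t = (x, c, yh) \<Longrightarrow> ?S ! t = (x, altlab x i c yh)"
    using len ysn by simp
  have fb: "\<forall>t<length h. (ys ! t = snd (snd (h ! t))) \<longleftrightarrow> fst (snd (h ! t))"
  proof (intro allI impI)
    fix t assume t: "t < length h"
    obtain x c yh where ht: "h ! t = (x, c, yh)" by (cases "h ! t") auto
    show "(ys ! t = snd (snd (h ! t))) \<longleftrightarrow> fst (snd (h ! t))"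
      using ysn[OF t ht] ht altlab_fb by simp
  qed
  have all: "\<forall>p\<in>set ?S. fst p \<in> instances n k \<and> snd p \<in> {1..k}"
  proof
    fix p assume "p \<in> set ?S"
    then obtain t where t: "t < length ?S" "?S ! t = p" by (metis in_set_conv_nth)
    obtain x c yh where ht: "h ! t = (x, c, yh)" by (cases "h ! t") auto
    have tl: "t < length h" using t len by simp
    have pe: "p = (x, altlab x i c yh)" using Snth[OF tl ht] t by simp
    have mem: "(x, c, yh) \<in> set h" using tl ht by (metis nth_mem)
    then have xi: "x \<in> instances n k" and cy: "c \<longrightarrow> yh \<in> {1..k}" using wf unfolding wfh_def by auto
    have "x ! i \<in> set x" using xi i(1) unfolding instances_def by auto
    then have "x ! i \<in> {1..k}" using xi unfolding instances_def by auto
    then have "altlab x i c yh \<in> {1..k}" using cy k by (auto simp: altlab_def)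
    then show "fst p \<in> instances n k \<and> snd p \<in> {1..k}" using xi pe by simp
  qed
  have "length (filter (\<lambda>(x, y). x ! i \<noteq> y) ?S) = cnt h i"
  proof -
    have "length (filter (\<lambda>(x, y). x ! i \<noteq> y) ?S) = card {t. t < length ?S \<and> (case ?S ! t of (x, y) \<Rightarrow> x ! i \<noteq> y)}"
      by (simp add: length_filter_conv_card)
    also have "{t. t < length ?S \<and> (case ?S ! t of (x, y) \<Rightarrow> x ! i \<noteq> y)} = {t. t < length h \<and> (case h ! t of (x, c, yh) \<Rightarrow> charged x c yh i)}"
    proof (rule Collect_cong)
      fix t
      show "(t < length ?S \<and> (case ?S ! t of (x, y) \<Rightarrow> x ! i \<noteq> y)) = (t < length h \<and> (case h ! t of (x, c, yh) \<Rightarrow> charged x c yh i))"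
      proof (cases "t < length h")
        case True
        obtain x c yh where ht: "h ! t = (x, c, yh)" by (cases "h ! t") auto
        have "?S ! t = (x, altlab x i c yh)" using Snth[OF True ht] .
        then show ?thesis using True ht len altlab_charged by simp
      next
        case False then show ?thesis using len by simp
      qed
    qed
    finally show ?thesis by (simp add: cnt_card)
  qed
  then have "in_P n k r ?S" using all i unfolding in_P_def by auto
  then show ?thesis unfolding realizable_def using len fb by blast
qed

lemma realizable_iff:
  "2 \<le> k \<Longrightarrow> realizable n k r h \<longleftrightarrow> wfh n k h \<and> (\<exists>i<n. cnt h i \<le> r)"
  using realizable_imp realizable_intro by blast

lemma gv_Suc_sum:
  assumes "set_pmf (L h (ax h)) \<subseteq> {1..k}" "set_pmf (lab h (L h (ax h))) \<subseteq> {1..k}"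
  shows "game_val L ax lab (Suc T) h =
    (\<Sum>yh\<in>{1..k}. \<Sum>y\<in>{1..k}. pmf (L h (ax h)) yh * pmf (lab h (L h (ax h))) y *
        ((if yh = y then 0 else 1) + game_val L ax lab T (h @ [(ax h, yh = y, yh)])))"
proof -
  let ?\<pi> = "L h (ax h)" let ?\<tau> = "lab h ?\<pi>"
  let ?f = "\<lambda>(yh, y). (if yh = y then 0 else 1) + game_val L ax lab T (h @ [(ax h, yh = y, yh)])"
  have "game_val L ax lab (Suc T) h = measure_pmf.expectation (pair_pmf ?\<pi> ?\<tau>) ?f"
    by (simp add: Let_def)
  also have "\<dots> = (\<Sum>a\<in>{1..k}\<times>{1..k}. ?f a * pmf (pair_pmf ?\<pi> ?\<tau>) a)"
    by (rule integral_measure_pmf_real) (use assms in auto)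
  also have "\<dots> = (\<Sum>yh\<in>{1..k}. \<Sum>y\<in>{1..k}. ?f (yh, y) * pmf (pair_pmf ?\<pi> ?\<tau>) (yh, y))"
    by (subst sum.cartesian_product) (simp add: case_prod_beta)
  also have "\<dots> = (\<Sum>yh\<in>{1..k}. \<Sum>y\<in>{1..k}. pmf ?\<pi> yh * pmf ?\<tau> y *
        ((if yh = y then 0 else 1) + game_val L ax lab T (h @ [(ax h, yh = y, yh)])))"
    by (simp add: pmf_pair mult.commute mult.left_commute)
  finally show ?thesis .
qed

lemma gv_nonneg: "0 \<le> game_val L ax lab T h"
proof (induction T arbitrary: h)
  case 0 then show ?case by simp
next
  case (Suc T)
  show ?case
    by (simp add: Let_def, rule integral_nonneg_AE) (auto intro!: add_nonneg_nonneg Suc.IH)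
qed

lemma gv_cong:
  assumes "\<And>h. length h < N \<Longrightarrow> ax h = ax' h \<and> lab h = lab' h"
  shows "length h + T \<le> N \<Longrightarrow> game_val L ax lab T h = game_val L ax' lab' T h"
proof (induction T arbitrary: h)
  case 0 then show ?case by simp
next
  case (Suc T)
  have e: "ax h = ax' h" "lab h = lab' h" using assms Suc.prems by auto
  have "\<And>z. game_val L ax lab T (h @ [z]) = game_val L ax' lab' T (h @ [z])"
    using Suc.IH Suc.prems by simp
  then show ?case by (simp add: Let_def e)
qed


lemma ln_le_half: "0 < (y::real) \<Longrightarrow> ln y \<le> y / 2"
proof -
  assume y: "0 < y"
  have sq: "sqrt y * sqrt y = y" using y by simp
  have sp: "0 < sqrt y" using y by simp
  have "ln y = 2 * ln (sqrt y)" using y by (simp add: ln_sqrt)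
  also have "\<dots> \<le> 2 * (sqrt y - 1)" using ln_le_minus_one[OF sp] by simp
  also have "\<dots> \<le> y / 2"
  proof -
    have "0 \<le> (sqrt y - 2)^2" by simp
    then have "0 \<le> sqrt y * sqrt y - 4 * sqrt y + 4" by (simp add: power2_eq_square algebra_simps)
    then show ?thesis using sq by simp
  qed
  finally show ?thesis .
qed

lemma ln_ge_half: "2 \<le> (x::real) \<Longrightarrow> 1/2 \<le> ln x"
proof -
  assume x: "2 \<le> x"
  have "ln (1/x) \<le> 1/x - 1" by (rule ln_le_minus_one) (use x in simp)
  moreover have "ln (1/x) = - ln x" using x by (simp add: ln_div)
  moreover have "1/x \<le> 1/2" using x by (simp add: field_simps)
  ultimately show ?thesis by linarith
qed

lemma coreA:
  fixes a :: "nat \<Rightarrow> real"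
  assumes nn: "\<And>j. 0 \<le> a j" and s1: "(\<Sum>j\<in>{1..k}. a j) = 1" and y: "y \<in> {1..k}"
    and e: "0 < \<epsilon>" "\<epsilon> < 1" and P: "1 \<le> D * (1 - \<epsilon>)" and D: "0 < D"
    and Q: "1 / (D * (1 - \<epsilon>)) \<le> (\<Sum>j\<in>{1..k}. (a j)^2)"
  shows "(\<Sum>yh\<in>{1..k}. a yh * ((if yh = y then 0 else 1) +
            D * ln (if yh = y then a y + \<epsilon> * (1 - a y) else 1 - (1 - \<epsilon>) * a yh))) \<le> 0"
proof -
  define s where "s = 1 - \<epsilon>"
  define p where "p = D * s"
  have s: "0 < s" "s < 1" using e by (auto simp: s_def)
  have le1: "\<And>j. j \<in> {1..k} \<Longrightarrow> a j \<le> 1"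
  proof -
    fix j assume j: "j \<in> {1..k}"
    have "a j \<le> (\<Sum>j\<in>{1..k}. a j)" by (rule member_le_sum) (use j nn in auto)
    then show "a j \<le> 1" using s1 by simp
  qed
  let ?f = "\<lambda>yh. a yh * ((if yh = y then 0 else 1) +
            D * ln (if yh = y then a y + \<epsilon> * (1 - a y) else 1 - (1 - \<epsilon>) * a yh))"
  have fin: "finite {1..k}" by simp
  have split: "(\<Sum>yh\<in>{1..k}. ?f yh) = ?f y + (\<Sum>yh\<in>{1..k} - {y}. ?f yh)"
    by (rule sum.remove[OF fin y])
  have ay: "0 \<le> a y" "a y \<le> 1" using nn le1 y by auto
  have t1: "?f y \<le> - (a y * p * (1 - a y))"
  proof -
    have q0: "0 \<le> a y * (1 - \<epsilon>)" using ay e by simp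
    have eq: "a y + \<epsilon> * (1 - a y) = a y * (1 - \<epsilon>) + \<epsilon>" by (simp add: algebra_simps)
    have z: "0 < a y + \<epsilon> * (1 - a y)" using q0 e(1) eq by linarith
    have "ln (a y + \<epsilon> * (1 - a y)) \<le> a y + \<epsilon> * (1 - a y) - 1" by (rule ln_le_minus_one[OF z])
    also have "\<dots> = - s * (1 - a y)" by (simp add: s_def algebra_simps)
    finally have l: "ln (a y + \<epsilon> * (1 - a y)) \<le> - s * (1 - a y)" .
    have "D * ln (a y + \<epsilon> * (1 - a y)) \<le> D * (- s * (1 - a y))"
      using mult_left_mono[OF l] D by simp
    then have "a y * (D * ln (a y + \<epsilon> * (1 - a y))) \<le> a y * (D * (- s * (1 - a y)))"
      using ay(1) by (rule mult_left_mono)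
    then show ?thesis by (simp add: p_def algebra_simps)
  qed
  have t2: "\<And>j. j \<in> {1..k} - {y} \<Longrightarrow> ?f j \<le> a j - p * (a j)^2"
  proof -
    fix j assume j: "j \<in> {1..k} - {y}"
    have aj: "0 \<le> a j" "a j \<le> 1" using nn le1 j by auto
    have "s * a j \<le> s * 1" using aj s by (intro mult_left_mono) auto
    then have z: "0 < 1 - s * a j" using s by linarith
    have l: "ln (1 - s * a j) \<le> - s * a j" using ln_le_minus_one[OF z] by simp
    have "D * ln (1 - s * a j) \<le> D * (- s * a j)"
      using mult_left_mono[OF l] D by simp
    then have "1 + D * ln (1 - s * a j) \<le> 1 - p * a j" by (simp add: p_def)
    then have "a j * (1 + D * ln (1 - s * a j)) \<le> a j * (1 - p * a j)"
      using aj(1) by (rule mult_left_mono)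
    moreover have "?f j = a j * (1 + D * ln (1 - s * a j))" using j by (simp add: s_def)
    ultimately show "?f j \<le> a j - p * (a j)^2" by (simp add: algebra_simps power2_eq_square)
  qed
  define Qv where "Qv = (\<Sum>j\<in>{1..k}. (a j)^2)"
  have r1: "(\<Sum>j\<in>{1..k} - {y}. a j) = 1 - a y" using s1 sum.remove[OF fin y, of a] by simp
  have r2: "(\<Sum>j\<in>{1..k} - {y}. (a j)^2) = Qv - (a y)^2"
    using sum.remove[OF fin y, of "\<lambda>j. (a j)^2"] by (simp add: Qv_def)
  have "(\<Sum>yh\<in>{1..k} - {y}. ?f yh) \<le> (\<Sum>j\<in>{1..k} - {y}. a j - p * (a j)^2)"
    by (rule sum_mono) (rule t2)
  also have "\<dots> = (\<Sum>j\<in>{1..k} - {y}. a j) - p * (\<Sum>j\<in>{1..k} - {y}. (a j)^2)"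
    by (simp add: sum_subtractf sum_distrib_left)
  also have "\<dots> = (1 - a y) - p * (Qv - (a y)^2)" by (simp only: r1 r2)
  finally have rest: "(\<Sum>yh\<in>{1..k} - {y}. ?f yh) \<le> (1 - a y) - p * (Qv - (a y)^2)" .
  have p1: "1 \<le> p" using P by (simp add: p_def s_def)
  have pQ: "1 \<le> p * Qv"
  proof -
    have "1 / p \<le> Qv" using Q by (simp add: p_def s_def Qv_def)
    then show ?thesis using p1 by (simp add: field_simps)
  qed
  have qa: "(a y)^2 \<le> Qv" unfolding Qv_def
    by (rule member_le_sum[OF y]) auto
  have fin_ineq: "(1 - a y) - p * (Qv - (a y)^2) - a y * p * (1 - a y) \<le> 0"
  proof (cases "1 \<le> p * a y")
    case True
    have "0 \<le> p * (Qv - (a y)^2)" using qa p1 by simp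
    moreover have "(1 - a y) - a y * p * (1 - a y) = (1 - a y) * (1 - p * a y)" by (simp add: algebra_simps)
    moreover have "(1 - a y) * (1 - p * a y) \<le> 0" using True ay by (simp add: mult_nonneg_nonpos)
    ultimately show ?thesis by linarith
  next
    case False
    have e1: "(1 - a y) - p * (Qv - (a y)^2) - a y * p * (1 - a y) = (1 - p * Qv) + a y * (2 * p * a y - 1 - p)"
      by (simp add: algebra_simps power2_eq_square)
    have "2 * p * a y - 1 - p \<le> 0" using False p1 by linarith
    then have "a y * (2 * p * a y - 1 - p) \<le> 0" using ay by (simp add: mult_nonneg_nonpos)
    then show ?thesis using e1 pQ by linarith
  qed
  show ?thesis using split t1 rest fin_ineq by linarith
qed

lemma coreB:
  fixes a :: "nat \<Rightarrow> real"
  assumes nn: "\<And>j. 0 \<le> a j" and s1: "(\<Sum>j\<in>{1..k}. a j) = 1" and y: "y \<in> {1..k}"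
    and e: "0 < \<epsilon>" "\<epsilon> \<le> 1/2" and D: "0 < D"
    and Q: "(\<Sum>j\<in>{1..k}. (a j)^2) < 1 / (D * (1 - \<epsilon>))"
    and ee: "\<epsilon>^2 \<le> 1 / D" and hl: "D * ln (6 / D) / 2 \<le> - real k"
  shows "(\<Sum>yh\<in>{1..k}. (1 / real k) * ((if yh = y then 0 else 1) +
            D * ln (if yh = y then a y + \<epsilon> * (1 - a y) else 1 - (1 - \<epsilon>) * a yh))) \<le> 0"
proof -
  have le1: "\<And>j. j \<in> {1..k} \<Longrightarrow> a j \<le> 1"
  proof -
    fix j assume j: "j \<in> {1..k}"
    have "a j \<le> (\<Sum>j\<in>{1..k}. a j)" by (rule member_le_sum) (use j nn in auto)
    then show "a j \<le> 1" using s1 by simp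
  qed
  have k1: "1 \<le> k" using y by simp
  let ?g = "\<lambda>yh. (if yh = y then 0 else 1) +
            D * ln (if yh = y then a y + \<epsilon> * (1 - a y) else 1 - (1 - \<epsilon>) * a yh)"
  have fin: "finite {1..k}" by simp
  have ay: "0 \<le> a y" "a y \<le> 1" using nn le1 y by auto
  define z where "z = a y + \<epsilon> * (1 - a y)"
  have q0: "0 \<le> a y * (1 - \<epsilon>)" using ay e by simp
  have z0: "0 < z" unfolding z_def using q0 e(1) by (simp add: algebra_simps)
  have zle: "z \<le> a y + \<epsilon>" unfolding z_def using ay e by (simp add: mult_left_le)
  have "z^2 \<le> (a y + \<epsilon>)^2" using z0 zle by (intro power_mono) auto
  also have "\<dots> \<le> 2 * (a y)^2 + 2 * \<epsilon>^2"
  proof -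
    have "0 \<le> (a y - \<epsilon>)^2" by simp
    then show ?thesis by (simp add: power2_eq_square algebra_simps)
  qed
  also have "\<dots> \<le> 6 / D"
  proof -
    have qa: "(a y)^2 \<le> (\<Sum>j\<in>{1..k}. (a j)^2)" by (rule member_le_sum[OF y]) auto
    have "1 / (D * (1 - \<epsilon>)) \<le> 2 / D" using D e by (simp add: field_simps)
    then have "(a y)^2 \<le> 2 / D" using qa Q by linarith
    then show ?thesis using ee by (simp add: field_simps)
  qed
  finally have z2: "z^2 \<le> 6 / D" .
  have "ln (z^2) \<le> ln (6 / D)" using z2 z0 D by (subst ln_le_cancel_iff) auto
  moreover have "ln (z^2) = 2 * ln z" using z0 by (simp add: ln_realpow)
  ultimately have lz: "ln z \<le> ln (6 / D) / 2" by simp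
  have "D * ln z \<le> D * (ln (6 / D) / 2)" using mult_left_mono[OF lz] D by simp
  then have "D * ln z \<le> D * ln (6 / D) / 2" by simp
  then have gy: "?g y \<le> - real k" using hl by (simp add: z_def)
  have gj: "\<And>j. j \<in> {1..k} - {y} \<Longrightarrow> ?g j \<le> 1"
  proof -
    fix j assume j: "j \<in> {1..k} - {y}"
    have aj: "0 \<le> a j" "a j \<le> 1" using nn le1 j by auto
    have "(1 - \<epsilon>) * a j \<le> (1 - \<epsilon>) * 1" using aj e by (intro mult_left_mono) auto
    then have "(1 - \<epsilon>) * a j \<le> 1 - \<epsilon>" by simp
    then have zj: "0 < 1 - (1 - \<epsilon>) * a j" using e by linarith
    have "0 \<le> (1 - \<epsilon>) * a j" using aj e by simp
    then have "ln (1 - (1 - \<epsilon>) * a j) \<le> 0" using zj by simp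
    then have "D * ln (1 - (1 - \<epsilon>) * a j) \<le> 0" using D by (simp add: mult_nonneg_nonpos)
    then show "?g j \<le> 1" using j by simp
  qed
  have "(\<Sum>yh\<in>{1..k}. ?g yh) = ?g y + (\<Sum>yh\<in>{1..k} - {y}. ?g yh)"
    by (rule sum.remove[OF fin y])
  also have "(\<Sum>yh\<in>{1..k} - {y}. ?g yh) \<le> (\<Sum>yh\<in>{1..k} - {y}. 1)"
    by (rule sum_mono) (rule gj)
  also have "(\<Sum>yh\<in>{1..k} - {y}. (1::real)) = real k - 1" using y k1 by (simp add: of_nat_diff)
  finally have "(\<Sum>yh\<in>{1..k}. ?g yh) \<le> 0" using gy by linarith
  then have "(1 / real k) * (\<Sum>yh\<in>{1..k}. ?g yh) \<le> 0" using k1 by (intro mult_nonneg_nonpos) auto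
  then show ?thesis by (simp add: sum_distrib_left)
qed

lemma params:
  assumes k: "2 \<le> k"
  defines "D \<equiv> 12 * real k / ln (real k)" and "\<epsilon> \<equiv> 1 / real k ^ 3"
  shows "0 < \<epsilon>" "\<epsilon> \<le> 1/8" "0 < D" "1 \<le> D * (1 - \<epsilon>)" "\<epsilon>^2 \<le> 1 / D"
    "D * ln (6 / D) / 2 \<le> - real k"
proof -
  have kr: "2 \<le> real k" using k by simp
  have lk: "1/2 \<le> ln (real k)" using ln_ge_half[OF kr] .
  have lk0: "0 < ln (real k)" using lk by simp
  have lkk: "ln (real k) \<le> real k" using ln_le_minus_one[of "real k"] kr by simp
  have k3: "8 \<le> real k ^ 3"
  proof -
    have "2^3 \<le> real k ^ 3" using kr by (intro power_mono) auto
    then show ?thesis by simp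
  qed
  show e0: "0 < \<epsilon>" unfolding \<epsilon>_def using kr by simp
  show e8: "\<epsilon> \<le> 1/8" unfolding \<epsilon>_def using k3 by (simp add: divide_simps)
  show D0: "0 < D" unfolding D_def using kr lk0 by simp
  have D12: "12 \<le> D" unfolding D_def using lkk lk0 kr by (simp add: field_simps)
  show "1 \<le> D * (1 - \<epsilon>)"
  proof -
    have "12 * (7/8) \<le> D * (1 - \<epsilon>)" using D12 e8 by (intro mult_mono) auto
    then show ?thesis by simp
  qed
  show "\<epsilon>^2 \<le> 1 / D"
  proof -
    have k5: "32 \<le> real k ^ 5"
    proof -
      have "2^5 \<le> real k ^ 5" using kr by (intro power_mono) auto
      then show ?thesis by simp
    qed
    have "\<epsilon>^2 = 1 / real k ^ 6" unfolding \<epsilon>_def by (simp add: power_divide flip: power_mult)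
    also have "\<dots> \<le> 1 / (24 * real k)"
    proof -
      have "24 * real k \<le> real k ^ 5 * real k" using k5 kr by (intro mult_right_mono) auto
      also have "\<dots> = real k ^ 6" by (simp add: power_Suc2 numeral_eq_Suc del: power_Suc)
      finally show ?thesis using kr by (intro divide_left_mono) auto
    qed
    also have "\<dots> \<le> 1 / D" unfolding D_def using lk kr lk0 by (simp add: field_simps)
    finally show ?thesis .
  qed
  show "D * ln (6 / D) / 2 \<le> - real k"
  proof -
    have "6 / D = ln (real k) / (2 * real k)" unfolding D_def using kr lk0 by (simp add: field_simps)
    then have "ln (6 / D) = ln (ln (real k)) - ln 2 - ln (real k)"
      using lk0 kr by (simp add: ln_div ln_mult)
    also have "\<dots> \<le> ln (real k) / 2 - ln (real k)"
    proof -
      have "0 \<le> ln (2::real)" by simp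
      then show ?thesis using ln_le_half[OF lk0] by linarith
    qed
    finally have l: "ln (6 / D) \<le> - ln (real k) / 2" by simp
    have "D * ln (6 / D) \<le> D * (- ln (real k) / 2)" using mult_left_mono[OF l] D0 by simp
    also have "\<dots> = - 6 * real k" unfolding D_def using lk0 by (simp add: field_simps)
    finally show ?thesis using kr by simp
  qed
qed


definition ek :: "nat \<Rightarrow> real" where "ek k = 1 / real k ^ 3"
definition Dk :: "nat \<Rightarrow> real" where "Dk k = 12 * real k / ln (real k)"
definition wt :: "nat \<Rightarrow> hist \<Rightarrow> nat \<Rightarrow> real" where "wt k h i = ek k ^ cnt h i"
definition Wt :: "nat \<Rightarrow> nat \<Rightarrow> hist \<Rightarrow> real" where "Wt n k h = (\<Sum>i<n. wt k h i)"
definition grp :: "nat \<Rightarrow> nat \<Rightarrow> hist \<Rightarrow> inst \<Rightarrow> nat \<Rightarrow> real" where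
  "grp n k h x j = (\<Sum>i\<in>{i\<in>{..<n}. x ! i = j}. wt k h i)"
definition af :: "nat \<Rightarrow> nat \<Rightarrow> hist \<Rightarrow> inst \<Rightarrow> nat \<Rightarrow> real" where
  "af n k h x j = grp n k h x j / Wt n k h"
definition Qs :: "nat \<Rightarrow> nat \<Rightarrow> hist \<Rightarrow> inst \<Rightarrow> real" where
  "Qs n k h x = (\<Sum>j\<in>{1..k}. (af n k h x j)^2)"
definition condA :: "nat \<Rightarrow> nat \<Rightarrow> hist \<Rightarrow> inst \<Rightarrow> bool" where
  "condA n k h x \<longleftrightarrow> x \<in> instances n k \<and> 0 < n \<and> 1 / (Dk k * (1 - ek k)) \<le> Qs n k h x"
definition Lup :: "nat \<Rightarrow> nat \<Rightarrow> hist \<Rightarrow> inst \<Rightarrow> nat pmf" where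
  "Lup n k h x = (if condA n k h x
      then pmf_of_list (map (\<lambda>i. (x ! i, wt k h i / Wt n k h)) [0..<n]) else pmf_of_set {1..k})"
definition Psi :: "nat \<Rightarrow> nat \<Rightarrow> nat \<Rightarrow> hist \<Rightarrow> real" where
  "Psi n k r h = Dk k * (ln (Wt n k h) + 3 * real r * ln (real k))"

lemma ek_pos: "2 \<le> k \<Longrightarrow> 0 < ek k" by (simp add: ek_def)

lemma wt_pos: "2 \<le> k \<Longrightarrow> 0 < wt k h i" by (simp add: wt_def ek_pos)

lemma Wt_pos: "2 \<le> k \<Longrightarrow> 0 < n \<Longrightarrow> 0 < Wt n k h"
  unfolding Wt_def by (rule sum_pos) (auto simp: wt_pos)

lemma grp_nonneg: "2 \<le> k \<Longrightarrow> 0 \<le> grp n k h x j"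
  unfolding grp_def by (rule sum_nonneg) (simp add: wt_pos less_imp_le)

lemma af_nonneg: "2 \<le> k \<Longrightarrow> 0 < n \<Longrightarrow> 0 \<le> af n k h x j"
  unfolding af_def using grp_nonneg Wt_pos by (simp add: less_imp_le)

lemma inst_nth: "x \<in> instances n k \<Longrightarrow> i < n \<Longrightarrow> x ! i \<in> {1..k}"
  unfolding instances_def by (auto dest: nth_mem)

lemma grp_sum: "x \<in> instances n k \<Longrightarrow> (\<Sum>j\<in>{1..k}. grp n k h x j) = Wt n k h"
  unfolding grp_def Wt_def
  by (rule sum.group) (auto dest: inst_nth)

lemma af_sum: "2 \<le> k \<Longrightarrow> 0 < n \<Longrightarrow> x \<in> instances n k \<Longrightarrow> (\<Sum>j\<in>{1..k}. af n k h x j) = 1"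
  unfolding af_def using grp_sum[of x n k h] Wt_pos[of k n h]
  by (simp add: sum_divide_distrib[symmetric])

lemma sum_if_split:
  fixes w :: "nat \<Rightarrow> real"
  assumes "finite I"
  shows "(\<Sum>i\<in>I. w i * (if P i then \<alpha> else \<beta>)) =
          \<alpha> * (\<Sum>i\<in>{i\<in>I. P i}. w i) + \<beta> * ((\<Sum>i\<in>I. w i) - (\<Sum>i\<in>{i\<in>I. P i}. w i))"
proof -
  have a: "(\<Sum>i\<in>I. w i * (if P i then \<alpha> else \<beta>)) = (\<Sum>i\<in>I \<inter> {i. P i}. w i * \<alpha>) + (\<Sum>i\<in>I \<inter> - {i. P i}. w i * \<beta>)"
    by (subst sum.If_cases[symmetric]) (use assms in \<open>auto intro!: sum.cong\<close>)
  have b: "(\<Sum>i\<in>I. w i) = (\<Sum>i\<in>I \<inter> {i. P i}. w i) + (\<Sum>i\<in>I \<inter> - {i. P i}. w i)"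
    by (subst sum.If_cases[symmetric]) (use assms in auto)
  have c: "I \<inter> {i. P i} = {i\<in>I. P i}" by auto
  show ?thesis using a b unfolding c by (simp add: sum_distrib_left[symmetric] sum_distrib_right[symmetric] algebra_simps)
qed

lemma wt_snoc: "wt k (h @ [(x, c, yh)]) i = wt k h i * (if charged x c yh i then ek k else 1)"
  by (simp add: wt_def power_add)

lemma Wt_snoc_wrong:
  assumes "2 \<le> k" "0 < n"
  shows "Wt n k (h @ [(x, False, yh)]) = Wt n k h * (1 - (1 - ek k) * af n k h x yh)"
proof -
  have "Wt n k (h @ [(x, False, yh)]) = (\<Sum>i<n. wt k h i * (if x ! i = yh then ek k else 1))"
    unfolding Wt_def by (simp add: wt_snoc charged_def)
  also have "\<dots> = ek k * grp n k h x yh + 1 * (Wt n k h - grp n k h x yh)"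
    unfolding grp_def Wt_def by (rule sum_if_split) simp
  also have "\<dots> = Wt n k h * (1 - (1 - ek k) * af n k h x yh)"
    unfolding af_def using Wt_pos[OF assms, of h] by (simp add: field_simps)
  finally show ?thesis .
qed

lemma Wt_snoc_right:
  assumes "2 \<le> k" "0 < n"
  shows "Wt n k (h @ [(x, True, y)]) = Wt n k h * (af n k h x y + ek k * (1 - af n k h x y))"
proof -
  have "Wt n k (h @ [(x, True, y)]) = (\<Sum>i<n. wt k h i * (if x ! i = y then 1 else ek k))"
    unfolding Wt_def by (auto simp: wt_snoc charged_def intro!: sum.cong)
  also have "\<dots> = 1 * grp n k h x y + ek k * (Wt n k h - grp n k h x y)"
    unfolding grp_def Wt_def by (rule sum_if_split) simp
  also have "\<dots> = Wt n k h * (af n k h x y + ek k * (1 - af n k h x y))"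
    unfolding af_def using Wt_pos[OF assms, of h] by (simp add: field_simps)
  finally show ?thesis .
qed

lemma set_pmf_Lup: "2 \<le> k \<Longrightarrow> set_pmf (Lup n k h x) \<subseteq> {1..k}"
proof (cases "condA n k h x")
  case True
  assume k: "2 \<le> k"
  have x: "x \<in> instances n k" and n: "0 < n" using True by (auto simp: condA_def)
  let ?xs = "map (\<lambda>i. (x ! i, wt k h i / Wt n k h)) [0..<n]"
  have wf: "pmf_of_list_wf ?xs"
  proof (rule pmf_of_list_wfI)
    fix z assume "z \<in> set (map snd ?xs)"
    then show "0 \<le> z" using wt_pos[OF k] Wt_pos[OF k n] by (auto simp: less_imp_le)
  next
    have "sum_list (map snd ?xs) = (\<Sum>i\<in>set [0..<n]. wt k h i / Wt n k h)"
      by (simp add: o_def sum_list_distinct_conv_sum_set)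
    also have "\<dots> = (\<Sum>i<n. wt k h i) / Wt n k h" by (simp add: sum_divide_distrib atLeast0LessThan)
    also have "\<dots> = 1" using Wt_pos[OF k n, of h] by (simp add: Wt_def)
    finally show "sum_list (map snd ?xs) = 1" .
  qed
  have "set_pmf (pmf_of_list ?xs) \<subseteq> set (map fst ?xs)" by (rule set_pmf_of_list[OF wf])
  also have "\<dots> \<subseteq> {1..k}" using inst_nth[OF x] by auto
  finally show ?thesis using True by (simp add: Lup_def)
next
  case False
  assume "2 \<le> k"
  then show ?thesis using False by (simp add: Lup_def)
qed

lemma pmf_Lup_A:
  assumes k: "2 \<le> k" and A: "condA n k h x"
  shows "pmf (Lup n k h x) j = af n k h x j"
proof -
  have x: "x \<in> instances n k" and n: "0 < n" using A by (auto simp: condA_def)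
  let ?xs = "map (\<lambda>i. (x ! i, wt k h i / Wt n k h)) [0..<n]"
  have wf: "pmf_of_list_wf ?xs"
  proof (rule pmf_of_list_wfI)
    fix z assume "z \<in> set (map snd ?xs)"
    then show "0 \<le> z" using wt_pos[OF k] Wt_pos[OF k n] by (auto simp: less_imp_le)
  next
    have "sum_list (map snd ?xs) = (\<Sum>i\<in>set [0..<n]. wt k h i / Wt n k h)"
      by (simp add: o_def sum_list_distinct_conv_sum_set)
    also have "\<dots> = (\<Sum>i<n. wt k h i) / Wt n k h" by (simp add: sum_divide_distrib atLeast0LessThan)
    also have "\<dots> = 1" using Wt_pos[OF k n, of h] by (simp add: Wt_def)
    finally show "sum_list (map snd ?xs) = 1" .
  qed
  have "pmf (Lup n k h x) j = sum_list (map snd (filter (\<lambda>z. fst z = j) ?xs))"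
    using A by (simp add: Lup_def pmf_pmf_of_list[OF wf])
  also have "\<dots> = sum_list (map (\<lambda>i. wt k h i / Wt n k h) (filter (\<lambda>i. x ! i = j) [0..<n]))"
    by (simp add: filter_map o_def)
  also have "\<dots> = (\<Sum>i\<in>set (filter (\<lambda>i. x ! i = j) [0..<n]). wt k h i / Wt n k h)"
    by (simp add: sum_list_distinct_conv_sum_set)
  also have "set (filter (\<lambda>i. x ! i = j) [0..<n]) = {i\<in>{..<n}. x ! i = j}" by auto
  also have "(\<Sum>i\<in>{i\<in>{..<n}. x ! i = j}. wt k h i / Wt n k h) = af n k h x j"
    by (simp add: af_def grp_def sum_divide_distrib)
  finally show ?thesis .
qed

lemma pmf_Lup_B:
  assumes k: "2 \<le> k" and B: "\<not> condA n k h x" and j: "j \<in> {1..k}"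
  shows "pmf (Lup n k h x) j = 1 / real k"
  using B j k by (simp add: Lup_def)

lemma Psi_snoc:
  assumes k: "2 \<le> k" and n: "0 < n" and f: "0 < f" and W: "Wt n k h' = Wt n k h * f"
  shows "Psi n k r h' = Psi n k r h + Dk k * ln f"
  using W Wt_pos[OF k n, of h] f by (simp add: Psi_def ln_mult algebra_simps)

lemma per_round:
  assumes k: "2 \<le> k" and n: "0 < n" and x: "x \<in> instances n k" and y: "y \<in> {1..k}"
  shows "(\<Sum>yh\<in>{1..k}. pmf (Lup n k h x) yh *
            ((if yh = y then 0 else 1) + Psi n k r (h @ [(x, yh = y, yh)]))) \<le> Psi n k r h"
proof -
  let ?\<pi> = "Lup n k h x"
  let ?a = "af n k h x"
  let ?e = "ek k"
  let ?fac = "\<lambda>yh. if yh = y then ?a y + ?e * (1 - ?a y) else 1 - (1 - ?e) * ?a yh"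
  have P: "0 < ?e" "?e \<le> 1/8" "0 < Dk k" "1 \<le> Dk k * (1 - ?e)" "?e^2 \<le> 1 / Dk k"
      "Dk k * ln (6 / Dk k) / 2 \<le> - real k"
    using params[OF k] unfolding ek_def Dk_def by auto
  have nn: "\<And>j. 0 \<le> ?a j" using af_nonneg[OF k n] .
  have s1: "(\<Sum>j\<in>{1..k}. ?a j) = 1" using af_sum[OF k n x] .
  have le1: "\<And>j. j \<in> {1..k} \<Longrightarrow> ?a j \<le> 1"
  proof -
    fix j assume j: "j \<in> {1..k}"
    have "?a j \<le> (\<Sum>j\<in>{1..k}. ?a j)" by (rule member_le_sum) (use j nn in auto)
    then show "?a j \<le> 1" using s1 by simp
  qed
  have facpos: "\<And>yh. yh \<in> {1..k} \<Longrightarrow> 0 < ?fac yh"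
  proof -
    fix yh assume yh: "yh \<in> {1..k}"
    show "0 < ?fac yh"
    proof (cases "yh = y")
      case True
      have "0 \<le> ?a y * (1 - ?e)" using nn P by simp
      moreover have "?a y + ?e * (1 - ?a y) = ?a y * (1 - ?e) + ?e" by (simp add: algebra_simps)
      ultimately show ?thesis using True P(1) by simp
    next
      case False
      have "(1 - ?e) * ?a yh \<le> (1 - ?e) * 1" using le1[OF yh] P by (intro mult_left_mono) auto
      then show ?thesis using False P(1) by simp
    qed
  qed
  have Ps: "\<And>yh. yh \<in> {1..k} \<Longrightarrow> Psi n k r (h @ [(x, yh = y, yh)]) = Psi n k r h + Dk k * ln (?fac yh)"
  proof -
    fix yh assume yh: "yh \<in> {1..k}"
    show "Psi n k r (h @ [(x, yh = y, yh)]) = Psi n k r h + Dk k * ln (?fac yh)"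
    proof (cases "yh = y")
      case True
      have f: "0 < ?a y + ?e * (1 - ?a y)" using facpos[OF yh] True by simp
      show ?thesis using Psi_snoc[OF k n f Wt_snoc_right[OF k n, of h x y]] True by simp
    next
      case False
      have f: "0 < 1 - (1 - ?e) * ?a yh" using facpos[OF yh] False by simp
      show ?thesis using Psi_snoc[OF k n f Wt_snoc_wrong[OF k n, of h x yh]] False by simp
    qed
  qed
  have spi: "(\<Sum>yh\<in>{1..k}. pmf ?\<pi> yh) = 1" by (rule sum_pmf_eq_1) (use set_pmf_Lup[OF k] in auto)
  have core: "(\<Sum>yh\<in>{1..k}. pmf ?\<pi> yh * ((if yh = y then 0 else 1) + Dk k * ln (?fac yh))) \<le> 0"
  proof (cases "condA n k h x")
    case True
    have Q: "1 / (Dk k * (1 - ?e)) \<le> (\<Sum>j\<in>{1..k}. (?a j)^2)" using True by (simp add: condA_def Qs_def)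
    have e1: "?e < 1" using P by simp
    show ?thesis using coreA[OF nn s1 y P(1) e1 P(4) P(3) Q] by (simp add: pmf_Lup_A[OF k True])
  next
    case False
    have Q: "(\<Sum>j\<in>{1..k}. (?a j)^2) < 1 / (Dk k * (1 - ?e))" using False x n by (simp add: condA_def Qs_def)
    have e2: "?e \<le> 1/2" using P by simp
    have "(\<Sum>yh\<in>{1..k}. pmf ?\<pi> yh * ((if yh = y then 0 else 1) + Dk k * ln (?fac yh)))
        = (\<Sum>yh\<in>{1..k}. (1 / real k) * ((if yh = y then 0 else 1) + Dk k * ln (?fac yh)))"
      by (rule sum.cong) (simp_all add: pmf_Lup_B[OF k False])
    also have "\<dots> \<le> 0" using coreB[OF nn s1 y P(1) e2 P(3) Q P(5) P(6)] .
    finally show ?thesis .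
  qed
  have "(\<Sum>yh\<in>{1..k}. pmf ?\<pi> yh * ((if yh = y then 0 else 1) + Psi n k r (h @ [(x, yh = y, yh)])))
      = (\<Sum>yh\<in>{1..k}. pmf ?\<pi> yh * Psi n k r h + pmf ?\<pi> yh * ((if yh = y then 0 else 1) + Dk k * ln (?fac yh)))"
    by (rule sum.cong) (simp_all add: Ps algebra_simps)
  also have "\<dots> = Psi n k r h * (\<Sum>yh\<in>{1..k}. pmf ?\<pi> yh) + (\<Sum>yh\<in>{1..k}. pmf ?\<pi> yh * ((if yh = y then 0 else 1) + Dk k * ln (?fac yh)))"
    by (simp add: sum.distrib sum_distrib_left mult.commute)
  also have "\<dots> \<le> Psi n k r h" using spi core by simp
  finally show ?thesis .
qed

lemma Psi_nonneg:
  assumes k: "2 \<le> k" and n: "0 < n" and i: "i < n" "cnt h i \<le> r"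
  shows "0 \<le> Psi n k r h"
proof -
  have e: "0 < ek k" "ek k \<le> 1" using params[OF k] unfolding ek_def by auto
  have "ek k ^ r \<le> ek k ^ cnt h i" using e i by (intro power_decreasing) auto
  also have "\<dots> \<le> Wt n k h" unfolding Wt_def wt_def
    by (rule member_le_sum) (use i e in auto)
  finally have w: "ek k ^ r \<le> Wt n k h" .
  have "ln (ek k ^ r) \<le> ln (Wt n k h)" using w e Wt_pos[OF k n, of h] by (subst ln_le_cancel_iff) auto
  moreover have "ln (ek k ^ r) = - 3 * real r * ln (real k)"
    using k by (simp add: ln_realpow ek_def ln_div)
  ultimately have "0 \<le> ln (Wt n k h) + 3 * real r * ln (real k)" by simp
  moreover have "0 < Dk k" using params[OF k] unfolding Dk_def by auto
  ultimately show ?thesis unfolding Psi_def by simp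
qed

lemma Psi_Nil: "2 \<le> k \<Longrightarrow> Psi n k r [] = Dk k * (ln (real n) + 3 * real r * ln (real k))"
  by (simp add: Psi_def Wt_def wt_def)

lemma upper_gen:
  assumes k: "2 \<le> k" and n: "0 < n"
    and Rc: "\<And>h. R h \<Longrightarrow> \<exists>i<n. cnt h i \<le> r"
    and clos: "\<And>h. R h \<Longrightarrow> length h < N \<Longrightarrow> ax h \<in> instances n k \<and>
               set_pmf (lab h (Lup n k h (ax h))) \<subseteq> {1..k} \<and>
               (\<forall>y\<in>set_pmf (lab h (Lup n k h (ax h))). \<forall>yh\<in>{1..k}. R (h @ [(ax h, yh = y, yh)]))"
  shows "R h \<Longrightarrow> length h + T \<le> N \<Longrightarrow> game_val (Lup n k) ax lab T h \<le> Psi n k r h"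
proof (induction T arbitrary: h)
  case 0
  then obtain i where "i < n" "cnt h i \<le> r" using Rc by blast
  then show ?case using Psi_nonneg[OF k n] by simp
next
  case (Suc T)
  let ?\<pi> = "Lup n k h (ax h)" let ?\<tau> = "lab h ?\<pi>"
  have cl: "ax h \<in> instances n k" "set_pmf ?\<tau> \<subseteq> {1..k}"
     "\<forall>y\<in>set_pmf ?\<tau>. \<forall>yh\<in>{1..k}. R (h @ [(ax h, yh = y, yh)])"
    using clos[OF Suc.prems(1)] Suc.prems(2) by auto
  let ?F = "\<lambda>yh y. (if yh = y then 0 else 1) + game_val (Lup n k) ax lab T (h @ [(ax h, yh = y, yh)])"
  have "game_val (Lup n k) ax lab (Suc T) h = (\<Sum>yh\<in>{1..k}. \<Sum>y\<in>{1..k}. pmf ?\<pi> yh * pmf ?\<tau> y * ?F yh y)"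
    by (rule gv_Suc_sum) (use set_pmf_Lup[OF k] cl(2) in auto)
  also have "\<dots> = (\<Sum>y\<in>{1..k}. pmf ?\<tau> y * (\<Sum>yh\<in>{1..k}. pmf ?\<pi> yh * ?F yh y))"
    by (subst sum.swap, rule sum.cong[OF refl], subst sum_distrib_left, rule sum.cong[OF refl]) (simp add: ac_simps)
  also have "\<dots> \<le> (\<Sum>y\<in>{1..k}. pmf ?\<tau> y * Psi n k r h)"
  proof (rule sum_mono)
    fix y assume y: "y \<in> {1..k}"
    show "pmf ?\<tau> y * (\<Sum>yh\<in>{1..k}. pmf ?\<pi> yh * ?F yh y) \<le> pmf ?\<tau> y * Psi n k r h"
    proof (cases "y \<in> set_pmf ?\<tau>")
      case False
      then show ?thesis by (simp add: set_pmf_iff)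
    next
      case True
      have "(\<Sum>yh\<in>{1..k}. pmf ?\<pi> yh * ?F yh y) \<le>
            (\<Sum>yh\<in>{1..k}. pmf ?\<pi> yh * ((if yh = y then 0 else 1) + Psi n k r (h @ [(ax h, yh = y, yh)])))"
      proof (rule sum_mono)
        fix yh assume yh: "yh \<in> {1..k}"
        have "R (h @ [(ax h, yh = y, yh)])" using cl(3) True yh by blast
        then have "game_val (Lup n k) ax lab T (h @ [(ax h, yh = y, yh)]) \<le> Psi n k r (h @ [(ax h, yh = y, yh)])"
          using Suc.IH Suc.prems(2) by simp
        then show "pmf ?\<pi> yh * ?F yh y \<le> pmf ?\<pi> yh * ((if yh = y then 0 else 1) + Psi n k r (h @ [(ax h, yh = y, yh)]))"
          by (intro mult_left_mono) auto
      qed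
      also have "\<dots> \<le> Psi n k r h" by (rule per_round[OF k n cl(1) y])
      finally show ?thesis by (intro mult_left_mono) auto
    qed
  qed
  also have "\<dots> = Psi n k r h" using sum_pmf_eq_1[of "{1..k}" ?\<tau>] cl(2)
    by (simp add: sum_distrib_right[symmetric])
  finally show ?case .
qed


definition Xr :: "nat \<Rightarrow> nat \<Rightarrow> inst" where
  "Xr n k = map (\<lambda>i. if i < k then i + 1 else 1) [0..<n]"

definition alive :: "nat \<Rightarrow> nat \<Rightarrow> hist \<Rightarrow> nat set" where
  "alive k r h = {i. i < k \<and> cnt h i \<le> r}"

definition pickR :: "nat \<Rightarrow> nat \<Rightarrow> hist \<Rightarrow> nat pmf \<Rightarrow> nat" where
  "pickR k r h \<pi> = arg_min_on (\<lambda>i. pmf \<pi> (i + 1)) (alive k r h)"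

definition labR :: "nat \<Rightarrow> nat \<Rightarrow> hist \<Rightarrow> nat pmf \<Rightarrow> nat pmf" where
  "labR k r h \<pi> = return_pmf (if alive k r h \<noteq> {} then pickR k r h \<pi> + 1 else 1)"

lemma Xr_inst: "k \<le> n \<Longrightarrow> 1 \<le> k \<Longrightarrow> Xr n k \<in> instances n k"
  unfolding Xr_def instances_def by auto

lemma Xr_nth: "i < n \<Longrightarrow> Xr n k ! i = (if i < k then i + 1 else 1)"
  unfolding Xr_def by simp

lemma alive_fin: "finite (alive k r h)" unfolding alive_def by simp

lemma pickR_props:
  assumes "alive k r h \<noteq> {}"
  shows "pickR k r h \<pi> \<in> alive k r h" "\<And>i. i \<in> alive k r h \<Longrightarrow> pmf \<pi> (pickR k r h \<pi> + 1) \<le> pmf \<pi> (i + 1)"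
proof -
  show "pickR k r h \<pi> \<in> alive k r h" unfolding pickR_def
    by (rule arg_min_if_finite(1)[OF alive_fin assms])
  fix i assume i: "i \<in> alive k r h"
  have "\<not> (\<exists>x\<in>alive k r h. pmf \<pi> (x + 1) < pmf \<pi> (pickR k r h \<pi> + 1))"
    unfolding pickR_def by (rule arg_min_if_finite(2)[OF alive_fin assms])
  then show "pmf \<pi> (pickR k r h \<pi> + 1) \<le> pmf \<pi> (i + 1)" using i by force
qed

lemma valid_R:
  assumes k: "2 \<le> k" and kn: "k \<le> n"
  shows "valid_adap_adv n k r (\<lambda>h. Xr n k) (labR k r)"
  unfolding valid_adap_adv_def
proof (intro allI conjI impI ballI)
  fix h \<pi>
  show xi: "Xr n k \<in> instances n k" using Xr_inst kn k by simp
  show "set_pmf (labR k r h \<pi>) \<subseteq> {1..k}"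
  proof (cases "alive k r h = {}")
    case True then show ?thesis using k by (simp add: labR_def)
  next
    case False
    have "pickR k r h \<pi> < k" using pickR_props(1)[OF False] by (simp add: alive_def)
    then show ?thesis using False by (simp add: labR_def)
  qed
  fix y yh assume R: "realizable n k r h" and y: "y \<in> set_pmf (labR k r h \<pi>)" and yh: "yh \<in> {1..k}"
  have wf: "wfh n k h" and ex: "\<exists>i<n. cnt h i \<le> r" using realizable_imp[OF R] by auto
  have wf': "wfh n k (h @ [(Xr n k, yh = y, yh)])" using wf xi yh by simp
  show "realizable n k r (h @ [(Xr n k, yh = y, yh)])"
  proof (cases "alive k r h = {}")
    case False
    let ?i = "pickR k r h \<pi>"
    have ia: "?i \<in> alive k r h" using pickR_props(1)[OF False] .
    have yv: "y = ?i + 1" using y False by (simp add: labR_def)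
    have il: "?i < n" "?i < k" using ia kn by (auto simp: alive_def)
    have "Xr n k ! ?i = y" using il yv by (simp add: Xr_nth)
    then have "\<not> charged (Xr n k) (yh = y) yh ?i" by (auto simp: charged_def)
    then have "cnt (h @ [(Xr n k, yh = y, yh)]) ?i \<le> r" using ia by (simp add: alive_def)
    then show ?thesis using realizable_intro[OF k wf' il(1)] by simp
  next
    case True
    obtain i where i: "i < n" "cnt h i \<le> r" using ex by blast
    have "\<not> i < k" using True i by (auto simp: alive_def)
    then have "Xr n k ! i = 1" using i by (simp add: Xr_nth)
    moreover have "y = 1" using y True by (simp add: labR_def)
    ultimately have "\<not> charged (Xr n k) (yh = y) yh i" by (auto simp: charged_def)
    then have "cnt (h @ [(Xr n k, yh = y, yh)]) i \<le> r" using i by simp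
    then show ?thesis using realizable_intro[OF k wf' i(1)] by simp
  qed
qed

definition PhiR :: "nat \<Rightarrow> nat \<Rightarrow> hist \<Rightarrow> real" where
  "PhiR k r h = (\<Sum>i<k. real (Suc r - cnt h i))"

definition PsiR :: "nat \<Rightarrow> nat \<Rightarrow> hist \<Rightarrow> real" where
  "PsiR k r h = max 0 (PhiR k r h - real (Suc r))"

lemma PhiR_le: "PhiR k r h \<le> real (Suc r) * real (card (alive k r h))"
proof -
  have "PhiR k r h \<le> (\<Sum>i<k. if cnt h i \<le> r then real (Suc r) else 0)"
    unfolding PhiR_def by (rule sum_mono) auto
  also have "\<dots> = (\<Sum>i\<in>{i\<in>{..<k}. cnt h i \<le> r}. real (Suc r))"
    by (rule sum.inter_filter[symmetric]) simp
  also have "{i\<in>{..<k}. cnt h i \<le> r} = alive k r h" by (auto simp: alive_def)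
  finally show ?thesis by (simp add: mult.commute)
qed

lemma PhiR_drop: "PhiR k r h - PhiR k r (h @ [(x, c, yh)]) \<le> real (card {i\<in>alive k r h. charged x c yh i})"
proof -
  have "PhiR k r h - PhiR k r (h @ [(x, c, yh)]) = (\<Sum>i<k. real (Suc r - cnt h i) - real (Suc r - cnt (h @ [(x, c, yh)]) i))"
    unfolding PhiR_def by (simp add: sum_subtractf)
  also have "\<dots> \<le> (\<Sum>i<k. if cnt h i \<le> r \<and> charged x c yh i then 1 else 0)"
    by (rule sum_mono) (auto simp: of_nat_diff)
  also have "\<dots> = (\<Sum>i\<in>{i\<in>{..<k}. cnt h i \<le> r \<and> charged x c yh i}. 1)"
    by (rule sum.inter_filter[symmetric]) simp
  also have "{i\<in>{..<k}. cnt h i \<le> r \<and> charged x c yh i} = {i\<in>alive k r h. charged x c yh i}"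
    by (auto simp: alive_def)
  finally show ?thesis by simp
qed

lemma min_aux: "a - d \<le> (a'::real) \<Longrightarrow> 0 \<le> d \<Longrightarrow> min a (T + 1) - d - 1 \<le> min a' T"
  by (cases "a' \<le> T"; cases "a \<le> T + 1") (auto simp: min_def)

lemma sum_return:
  assumes "(y::nat) \<in> {1..(k::nat)}"
  shows "(\<Sum>y'\<in>{1..k}. a * pmf (return_pmf y) y' * g y') = a * (g y :: real)"
proof -
  have "(\<Sum>y'\<in>{1..k}. a * pmf (return_pmf y) y' * g y') = (\<Sum>y'\<in>{1..k}. if y' = y then a * g y' else 0)"
    by (rule sum.cong) (auto simp: indicator_def)
  also have "\<dots> = a * g y" using assms by (subst sum.delta) auto
  finally show ?thesis .
qed

lemma lowR:
  assumes k: "2 \<le> k" and kn: "k \<le> n" and Lv: "\<And>h x. set_pmf (L h x) \<subseteq> {1..k}"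
  shows "(1/6) * min (PsiR k r h) (real T) \<le> game_val L (\<lambda>h. Xr n k) (labR k r) T h"
proof (induction T arbitrary: h)
  case 0
  have "0 \<le> PsiR k r h" by (simp add: PsiR_def)
  then show ?case by simp
next
  case (Suc T)
  show ?case
  proof (cases "PsiR k r h = 0")
    case True
    then show ?thesis using gv_nonneg[of L "\<lambda>h. Xr n k" "labR k r" "Suc T" h] by simp
  next
    case False
    then have Pbig: "real (Suc r) < PhiR k r h" and Peq: "PsiR k r h = PhiR k r h - real (Suc r)"
      by (auto simp: PsiR_def max_def split: if_splits)
    define m where "m = card (alive k r h)"
    have m2: "2 \<le> m"
    proof (rule ccontr)
      assume "\<not> 2 \<le> m"
      then have "real m \<le> 1" by simp
      then have "real (Suc r) * real m \<le> real (Suc r)" by (simp add: mult_left_le)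
      then show False using PhiR_le[of k r h] Pbig unfolding m_def by linarith
    qed
    have ne: "alive k r h \<noteq> {}" using m2 m_def by auto
    let ?x = "Xr n k"
    let ?\<pi> = "L h ?x"
    define i0 where "i0 = pickR k r h ?\<pi>"
    define y where "y = i0 + 1"
    have i0a: "i0 \<in> alive k r h" using pickR_props(1)[OF ne] i0_def by simp
    have i0k: "i0 < k" using i0a by (simp add: alive_def)
    have y1k: "y \<in> {1..k}" using i0k y_def by simp
    have lab: "labR k r h ?\<pi> = return_pmf y" using ne by (simp add: labR_def i0_def y_def)
    have pmin: "\<And>i. i \<in> alive k r h \<Longrightarrow> pmf ?\<pi> y \<le> pmf ?\<pi> (i + 1)"
      using pickR_props(2)[OF ne] unfolding y_def i0_def by blast
    have spi: "(\<Sum>yh\<in>{1..k}. pmf ?\<pi> yh) = 1" by (rule sum_pmf_eq_1) (use Lv in auto)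
    have mpi: "real m * pmf ?\<pi> y \<le> 1"
    proof -
      have "real m * pmf ?\<pi> y = (\<Sum>i\<in>alive k r h. pmf ?\<pi> y)" by (simp add: m_def)
      also have "\<dots> \<le> (\<Sum>i\<in>alive k r h. pmf ?\<pi> (i + 1))" by (rule sum_mono) (rule pmin)
      also have "\<dots> = (\<Sum>j\<in>(\<lambda>i. i + 1) ` alive k r h. pmf ?\<pi> j)" by (simp add: sum.reindex)
      also have "\<dots> \<le> (\<Sum>j\<in>{1..k}. pmf ?\<pi> j)"
        by (rule sum_mono2) (auto simp: alive_def)
      finally show ?thesis using spi by simp
    qed
    define M where "M = min (PsiR k r h) (real (Suc T))"
    define \<delta> where "\<delta> = (\<lambda>yh. if yh = y then real m - 1 else 1)"
    have drop: "\<And>yh. yh \<in> {1..k} \<Longrightarrow> PsiR k r h - \<delta> yh \<le> PsiR k r (h @ [(?x, yh = y, yh)])"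
    proof -
      fix yh assume yh: "yh \<in> {1..k}"
      have cb: "real (card {i\<in>alive k r h. charged ?x (yh = y) yh i}) \<le> \<delta> yh"
      proof (cases "yh = y")
        case True
        have "{i\<in>alive k r h. charged ?x (yh = y) yh i} \<subseteq> alive k r h - {i0}"
          using True i0k kn by (auto simp: charged_def Xr_nth y_def)
        then have "card {i\<in>alive k r h. charged ?x (yh = y) yh i} \<le> card (alive k r h - {i0})"
          by (intro card_mono) (auto simp: alive_fin)
        also have "\<dots> = m - 1" using i0a alive_fin by (simp add: m_def)
        finally show ?thesis using True m2 \<delta>_def by (simp add: of_nat_diff)
      next
        case False
        have "{i\<in>alive k r h. charged ?x (yh = y) yh i} \<subseteq> {yh - 1}"
          using False kn by (auto simp: charged_def Xr_nth alive_def)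
        then have "card {i\<in>alive k r h. charged ?x (yh = y) yh i} \<le> card {yh - 1}"
          by (intro card_mono) auto
        then show ?thesis using False \<delta>_def by simp
      qed
      have "PhiR k r h - PhiR k r (h @ [(?x, yh = y, yh)]) \<le> \<delta> yh" using PhiR_drop cb by (rule order_trans)
      then show "PsiR k r h - \<delta> yh \<le> PsiR k r (h @ [(?x, yh = y, yh)])"
        using Peq by (simp add: PsiR_def)
    qed
    have d0: "\<And>yh. 0 \<le> \<delta> yh" using m2 by (simp add: \<delta>_def)
    let ?F = "\<lambda>yh y. (if yh = y then 0 else 1) + game_val L (\<lambda>h. Xr n k) (labR k r) T (h @ [(?x, yh = y, yh)])"
    have "game_val L (\<lambda>h. Xr n k) (labR k r) (Suc T) h = (\<Sum>yh\<in>{1..k}. \<Sum>y'\<in>{1..k}. pmf ?\<pi> yh * pmf (labR k r h ?\<pi>) y' * ?F yh y')"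
      by (rule gv_Suc_sum) (use Lv lab y1k in auto)
    also have "\<dots> = (\<Sum>yh\<in>{1..k}. pmf ?\<pi> yh * ?F yh y)"
      unfolding lab by (rule sum.cong[OF refl]) (rule sum_return[OF y1k])
    finally have gv: "game_val L (\<lambda>h. Xr n k) (labR k r) (Suc T) h = (\<Sum>yh\<in>{1..k}. pmf ?\<pi> yh * ?F yh y)" .
    have "(\<Sum>yh\<in>{1..k}. pmf ?\<pi> yh * ((if yh = y then 0 else 1) + (1/6) * (M - \<delta> yh - 1)))
          \<le> (\<Sum>yh\<in>{1..k}. pmf ?\<pi> yh * ?F yh y)"
    proof (rule sum_mono)
      fix yh assume yh: "yh \<in> {1..k}"
      have "M - \<delta> yh - 1 \<le> min (PsiR k r (h @ [(?x, yh = y, yh)])) (real T)"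
        unfolding M_def using min_aux[OF drop[OF yh] d0[of yh], of "real T"] by (simp add: add.commute)
      also have "(1/6) * \<dots> \<le> game_val L (\<lambda>h. Xr n k) (labR k r) T (h @ [(?x, yh = y, yh)])"
        by (rule Suc.IH)
      finally have "(1/6) * (M - \<delta> yh - 1) \<le> game_val L (\<lambda>h. Xr n k) (labR k r) T (h @ [(?x, yh = y, yh)])"
        by simp
      then show "pmf ?\<pi> yh * ((if yh = y then 0 else 1) + (1/6) * (M - \<delta> yh - 1)) \<le> pmf ?\<pi> yh * ?F yh y"
        by (intro mult_left_mono) auto
    qed
    moreover have "(1/6) * M \<le> (\<Sum>yh\<in>{1..k}. pmf ?\<pi> yh * ((if yh = y then 0 else 1) + (1/6) * (M - \<delta> yh - 1)))"
    proof -
      let ?g = "\<lambda>yh. pmf ?\<pi> yh * ((if yh = y then 0 else 1) + (1/6) * (M - \<delta> yh - 1))"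
      have fin: "finite {1..k}" by simp
      have "(\<Sum>yh\<in>{1..k}. ?g yh) = ?g y + (\<Sum>yh\<in>{1..k} - {y}. ?g yh)"
        by (rule sum.remove[OF fin y1k])
      also have "(\<Sum>yh\<in>{1..k} - {y}. ?g yh) = (\<Sum>yh\<in>{1..k} - {y}. pmf ?\<pi> yh) * (1 + (1/6) * (M - 2))"
        by (simp add: sum_distrib_right \<delta>_def)
      also have "(\<Sum>yh\<in>{1..k} - {y}. pmf ?\<pi> yh) = 1 - pmf ?\<pi> y"
        using sum.remove[OF fin y1k, of "pmf ?\<pi>"] spi by simp
      finally have e: "(\<Sum>yh\<in>{1..k}. ?g yh) = pmf ?\<pi> y * ((1/6) * (M - real m)) + (1 - pmf ?\<pi> y) * (1 + (1/6) * (M - 2))"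
        by (simp add: \<delta>_def)
      have p0: "0 \<le> pmf ?\<pi> y" by simp
      have ph: "pmf ?\<pi> y \<le> 1/2"
      proof -
        have "2 * pmf ?\<pi> y \<le> real m * pmf ?\<pi> y" using m2 p0 by (intro mult_right_mono) auto
        then show ?thesis using mpi by simp
      qed
      have "pmf ?\<pi> y * ((1/6) * (M - real m)) + (1 - pmf ?\<pi> y) * (1 + (1/6) * (M - 2))
            = (1/6) * M + (2/3) * (1 - pmf ?\<pi> y) - (1/6) * (real m * pmf ?\<pi> y)"
        by (simp add: field_simps)
      also have "\<dots> \<ge> (1/6) * M" using mpi ph p0 by simp
      finally show ?thesis using e by simp
    qed
    ultimately show ?thesis using gv M_def by simp
  qed
qed


definition Gf :: "nat \<Rightarrow> nat \<Rightarrow> real" where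
  "Gf u m = real (min m u) - real (min m u) * (real (min m u) + 1) / (2 * real u)"

lemma Gf_0[simp]: "Gf u 0 = 0" by (simp add: Gf_def)

lemma Gf_1[simp]: "Gf (Suc 0) m = 0"
  by (cases m) (auto simp: Gf_def)

lemma Gf_kk: "1 \<le> k \<Longrightarrow> Gf k k = (real k - 1) / 2"
  by (simp add: Gf_def field_simps)

lemma Gf_G2: assumes "1 \<le> u" "1 \<le> m" shows "Gf u m \<le> 1 + Gf u (m - 1)"
proof (cases "m \<le> u")
  case True
  then have q: "min m u = m" "min (m - 1) u = m - 1" by auto
  have "Gf u m - Gf u (m - 1) = 1 - real m / real u"
    unfolding Gf_def q using assms by (simp add: of_nat_diff field_simps)
  moreover have "0 \<le> real m / real u" by simp
  ultimately show ?thesis by linarith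
next
  case False
  then have "min m u = u" "min (m - 1) u = u" by auto
  then show ?thesis by (simp add: Gf_def)
qed

lemma Gf_G3: assumes "1 \<le> u" "1 \<le> m"
  shows "Gf u m \<le> (1 / real u) * Gf 1 (m - 1) + ((real u - 1) / real u) * (1 + Gf (u - 1) (m - 1))"
proof (cases "u = 1")
  case True then show ?thesis by simp
next
  case False
  then have u2: "2 \<le> u" using assms by simp
  define q where "q = min m u"
  have q1: "1 \<le> q" using assms by (simp add: q_def)
  have qq: "min (m - 1) (u - 1) = q - 1" using assms by (simp add: q_def)
  have ru: "real (u - 1) = real u - 1" using assms by (simp add: of_nat_diff)
  have rq: "real (q - 1) = real q - 1" using q1 by (simp add: of_nat_diff)
  have "(1 / real u) * Gf 1 (m - 1) + ((real u - 1) / real u) * (1 + Gf (u - 1) (m - 1))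
      = ((real u - 1) / real u) * (1 + (real q - 1) - (real q - 1) * real q / (2 * (real u - 1)))"
  proof -
    have g1: "Gf 1 (m - 1) = 0" using Gf_1 by simp
    have qq': "min (m - Suc 0) (u - Suc 0) = q - Suc 0" using qq by simp
    have ru': "real (u - Suc 0) = real u - 1" using ru by simp
    have rq': "real (q - Suc 0) = real q - 1" using rq by simp
    show ?thesis unfolding g1 by (simp add: Gf_def qq' rq' ru')
  qed
  also have "\<dots> = real q - real q * (real q + 1) / (2 * real u)"
    using u2 by (simp add: field_simps)
  also have "\<dots> = Gf u m" by (simp add: Gf_def q_def)
  finally show ?thesis by simp
qed

definition dig :: "nat \<Rightarrow> nat \<Rightarrow> nat \<Rightarrow> nat" where "dig k p i = (i div k ^ p) mod k"

fun enc :: "nat \<Rightarrow> nat list \<Rightarrow> nat" where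
  "enc k [] = 0"
| "enc k (c # cs) = c + k * enc k cs"

lemma enc_lt: "(\<forall>c\<in>set cs. c < k) \<Longrightarrow> enc k cs < k ^ length cs"
proof (induction cs)
  case Nil then show ?case by simp
next
  case (Cons c cs)
  have ck: "c < k" using Cons.prems by simp
  have "enc k cs + 1 \<le> k ^ length cs" using Cons by simp
  then have "k * (enc k cs + 1) \<le> k * k ^ length cs" by (rule mult_le_mono2)
  moreover have "c + k * enc k cs < k * (enc k cs + 1)" using ck by (simp add: algebra_simps)
  ultimately show ?case by simp
qed

lemma enc_dig: "(\<forall>c\<in>set cs. c < k) \<Longrightarrow> q < length cs \<Longrightarrow> dig k q (enc k cs) = cs ! q"
proof (induction cs arbitrary: q)
  case Nil then show ?case by simp
next
  case (Cons c cs)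
  have ck: "c < k" using Cons.prems by simp
  then have k0: "0 < k" by simp
  show ?case
  proof (cases q)
    case 0 then show ?thesis using ck by (simp add: dig_def)
  next
    case (Suc q')
    have d: "(c + k * enc k cs) div k = enc k cs" using ck k0 by simp
    have "dig k q (enc k (c # cs)) = ((c + k * enc k cs) div k div k ^ q') mod k"
      by (simp add: dig_def Suc div_mult2_eq mult.commute)
    also have "\<dots> = dig k q' (enc k cs)" by (simp only: d dig_def)
    also have "\<dots> = cs ! q'" using Cons Suc by simp
    finally show ?thesis using Suc by simp
  qed
qed

definition Xd :: "nat \<Rightarrow> nat \<Rightarrow> nat \<Rightarrow> inst" where
  "Xd n k p = map (\<lambda>i. dig k p i + 1) [0..<n]"

definition candp :: "nat \<Rightarrow> nat \<Rightarrow> hist \<Rightarrow> nat set" where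
  "candp k p h = {v\<in>{1..k}. \<forall>\<tau><length h. \<tau> div k = p \<longrightarrow> ((v = snd (snd (h ! \<tau>))) = fst (snd (h ! \<tau>)))}"

definition axD :: "nat \<Rightarrow> nat \<Rightarrow> hist \<Rightarrow> inst" where
  "axD n k h = Xd n k (length h div k)"

definition SFs :: "nat \<Rightarrow> nat \<Rightarrow> nat \<Rightarrow> hist \<Rightarrow> nat set" where
  "SFs n k r h = {j\<in>{1..k}. \<exists>i<n. axD n k h ! i = j \<and> cnt h i \<le> r}"

definition goodc :: "nat \<Rightarrow> nat \<Rightarrow> nat \<Rightarrow> hist \<Rightarrow> bool" where
  "goodc n k r h \<longleftrightarrow> candp k (length h div k) h \<noteq> {} \<and>
     (\<forall>j\<in>candp k (length h div k) h. \<forall>yh\<in>{1..k}. realizable n k r (h @ [(axD n k h, yh = j, yh)]))"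

definition labD :: "nat \<Rightarrow> nat \<Rightarrow> nat \<Rightarrow> hist \<Rightarrow> nat pmf \<Rightarrow> nat pmf" where
  "labD n k r h \<pi> = (if goodc n k r h then pmf_of_set (candp k (length h div k) h)
      else if SFs n k r h \<noteq> {} then pmf_of_set (SFs n k r h) else return_pmf 1)"

lemma Xd_inst: "1 \<le> k \<Longrightarrow> Xd n k p \<in> instances n k"
proof -
  assume k: "1 \<le> k"
  have "\<And>i. dig k p i < k" unfolding dig_def using k by simp
  then have "\<And>i. dig k p i + 1 \<in> {1..k}" by (simp add: Suc_le_eq)
  then show ?thesis unfolding Xd_def instances_def by auto
qed

lemma Xd_nth: "i < n \<Longrightarrow> Xd n k p ! i = dig k p i + 1"
  unfolding Xd_def by simp

lemma inst_nthF: "x \<in> instances n k \<Longrightarrow> i < n \<Longrightarrow> x ! i \<in> {1..k}"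
  unfolding instances_def by (auto dest: nth_mem)

lemma candp_sub: "candp k p h \<subseteq> {1..k}" unfolding candp_def by auto

lemma candp_fin: "finite (candp k p h)" by (rule finite_subset[OF candp_sub]) simp

lemma SFs_fin: "finite (SFs n k r h)" unfolding SFs_def by simp

lemma valid_D:
  assumes k: "2 \<le> k"
  shows "valid_adap_adv n k r (axD n k) (labD n k r)"
  unfolding valid_adap_adv_def
proof (intro allI conjI impI ballI)
  fix h \<pi>
  show xi: "axD n k h \<in> instances n k" unfolding axD_def using Xd_inst k by simp
  show "set_pmf (labD n k r h \<pi>) \<subseteq> {1..k}"
  proof (cases "goodc n k r h")
    case True
    then have "candp k (length h div k) h \<noteq> {}" by (simp add: goodc_def)
    then show ?thesis using True candp_sub candp_fin by (simp add: labD_def)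
  next
    case False
    show ?thesis
    proof (cases "SFs n k r h = {}")
      case True then show ?thesis using False k by (simp add: labD_def)
    next
      case F2: False
      have "SFs n k r h \<subseteq> {1..k}" by (auto simp: SFs_def)
      then show ?thesis using False F2 SFs_fin by (simp add: labD_def)
    qed
  qed
  fix y yh assume R: "realizable n k r h" and y: "y \<in> set_pmf (labD n k r h \<pi>)" and yh: "yh \<in> {1..k}"
  show "realizable n k r (h @ [(axD n k h, yh = y, yh)])"
  proof (cases "goodc n k r h")
    case True
    have "y \<in> candp k (length h div k) h" using y True candp_fin by (simp add: labD_def goodc_def)
    then show ?thesis using True yh by (simp add: goodc_def)
  next
    case False
    have wf: "wfh n k h" and ex: "\<exists>i<n. cnt h i \<le> r" using realizable_imp[OF R] by auto
    have wf': "wfh n k (h @ [(axD n k h, yh = y, yh)])" using wf xi yh by simp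
    obtain i where i: "i < n" "cnt h i \<le> r" using ex by blast
    have "axD n k h ! i \<in> {1..k}" using xi i(1) by (rule inst_nthF)
    then have ne: "SFs n k r h \<noteq> {}" using i by (auto simp: SFs_def)
    then have "y \<in> SFs n k r h" using y False SFs_fin by (simp add: labD_def)
    then obtain i' where i': "i' < n" "axD n k h ! i' = y" "cnt h i' \<le> r" by (auto simp: SFs_def)
    then have "\<not> charged (axD n k h) (yh = y) yh i'" by (auto simp: charged_def)
    then have "cnt (h @ [(axD n k h, yh = y, yh)]) i' \<le> r" using i' by simp
    then show ?thesis using realizable_intro[OF k wf' i'(1)] by simp
  qed
qed

lemma candp_snoc:
  "candp k q (h @ [(x, c, yh)]) = (if length h div k = q then {v\<in>candp k q h. (v = yh) = c} else candp k q h)"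
proof -
  have "\<And>v. (\<forall>\<tau><length h + 1. \<tau> div k = q \<longrightarrow> ((v = snd (snd ((h @ [(x, c, yh)]) ! \<tau>))) = fst (snd ((h @ [(x, c, yh)]) ! \<tau>))))
      \<longleftrightarrow> (\<forall>\<tau><length h. \<tau> div k = q \<longrightarrow> ((v = snd (snd (h ! \<tau>))) = fst (snd (h ! \<tau>)))) \<and>
          (length h div k = q \<longrightarrow> (v = yh) = c)"
    by (auto simp: nth_append less_Suc_eq)
  then show ?thesis unfolding candp_def by auto
qed

lemma candp_Nil: "candp k q [] = {1..k}" unfolding candp_def by auto

definition InvD :: "nat \<Rightarrow> nat \<Rightarrow> nat \<Rightarrow> hist \<Rightarrow> bool" where
  "InvD n k d h \<longleftrightarrow> length h \<le> d * k \<and>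
     (\<forall>\<tau><length h. fst (h ! \<tau>) = Xd n k (\<tau> div k) \<and> snd (snd (h ! \<tau>)) \<in> {1..k}) \<and>
     (\<forall>q<d. candp k q h \<noteq> {})"

lemma InvD_Nil: "1 \<le> k \<Longrightarrow> InvD n k d []"
  unfolding InvD_def by (simp add: candp_Nil)

lemma InvD_snoc:
  assumes I: "InvD n k d h" and l: "length h < d * k" and y: "y \<in> candp k (length h div k) h" and yh: "yh \<in> {1..k}"
  shows "InvD n k d (h @ [(axD n k h, yh = y, yh)])"
proof -
  have a: "length (h @ [(axD n k h, yh = y, yh)]) \<le> d * k" using l by simp
  have b: "\<forall>\<tau><length (h @ [(axD n k h, yh = y, yh)]). fst ((h @ [(axD n k h, yh = y, yh)]) ! \<tau>) = Xd n k (\<tau> div k) \<and>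
            snd (snd ((h @ [(axD n k h, yh = y, yh)]) ! \<tau>)) \<in> {1..k}"
    using I yh by (auto simp: InvD_def nth_append less_Suc_eq axD_def)
  have c: "\<forall>q<d. candp k q (h @ [(axD n k h, yh = y, yh)]) \<noteq> {}"
  proof (intro allI impI)
    fix q assume q: "q < d"
    show "candp k q (h @ [(axD n k h, yh = y, yh)]) \<noteq> {}"
    proof (cases "length h div k = q")
      case True
      then have "y \<in> candp k q (h @ [(axD n k h, yh = y, yh)])" using y by (auto simp: candp_snoc)
      then show ?thesis by blast
    next
      case False
      then show ?thesis using I q by (simp add: candp_snoc InvD_def)
    qed
  qed
  show ?thesis using a b c by (simp add: InvD_def)
qed

lemma cnt_zero_t1:
  assumes "\<And>\<tau>. \<tau> < length h \<Longrightarrow> (fst (h ! \<tau>) ! i = snd (snd (h ! \<tau>))) = fst (snd (h ! \<tau>))"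
  and t: "t < length h"
  shows "\<not> (case h ! t of (x, c, yh) \<Rightarrow> charged x c yh i)"
proof -
    obtain x c yh where ht: "h ! t = (x, c, yh)" by (cases "h ! t") auto
    have "(x ! i = yh) = c" using assms(1)[OF t] ht by simp
    then have "\<not> charged x c yh i" by (auto simp: charged_def)
    then show ?thesis using ht by simp
qed

lemma cnt_zero:
  assumes "\<And>\<tau>. \<tau> < length h \<Longrightarrow> (fst (h ! \<tau>) ! i = snd (snd (h ! \<tau>))) = fst (snd (h ! \<tau>))"
  shows "cnt h i = 0"
proof -
  have "{t. t < length h \<and> (case h ! t of (x, c, yh) \<Rightarrow> charged x c yh i)} = {}"
  proof (intro equalityI subsetI)
    fix t assume "t \<in> {t. t < length h \<and> (case h ! t of (x, c, yh) \<Rightarrow> charged x c yh i)}"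
    then have t: "t < length h" and P: "case h ! t of (x, c, yh) \<Rightarrow> charged x c yh i" by auto
    show "t \<in> {}" using cnt_zero_t1[OF assms t] P by simp
  qed simp
  then show ?thesis by (simp add: cnt_card)
qed

lemma InvD_wfh:
  assumes I: "InvD n k d h" and k: "1 \<le> k"
  shows "wfh n k h"
  unfolding wfh_def
proof (intro ballI, clarify)
  fix x c yh assume "(x, c, yh) \<in> set h"
  then obtain t where t: "t < length h" "h ! t = (x, c, yh)" by (metis in_set_conv_nth)
  then have "x = Xd n k (t div k)" "yh \<in> {1..k}" using I by (auto simp: InvD_def)
  then show "x \<in> instances n k \<and> (c \<longrightarrow> yh \<in> {1..k})" using Xd_inst[OF k] by simp
qed

lemma InvD_goodc:
  assumes k: "2 \<le> k" and kd: "k ^ d \<le> n" and I: "InvD n k d h" and l: "length h < d * k"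
  shows "goodc n k r h"
proof -
  define p where "p = length h div k"
  have pd: "p < d" using l k unfolding p_def by (simp add: div_less_iff_less_mult mult.commute)
  have ne: "candp k p h \<noteq> {}" using I pd by (simp add: InvD_def)
  have rz: "realizable n k r (h @ [(axD n k h, yh = j, yh)])" if j: "j \<in> candp k p h" and yh: "yh \<in> {1..k}" for j yh
  proof -
    let ?h' = "h @ [(axD n k h, yh = j, yh)]"
    have I': "InvD n k d ?h'" using InvD_snoc[OF I l _ yh, of j] j by (simp add: p_def)
    define V where "V = (\<lambda>q. if q = p then j else if q < p then (SOME v. v \<in> candp k q h) else 1)"
    have Vc: "\<And>q. q \<le> p \<Longrightarrow> V q \<in> candp k q ?h'"
    proof -
      fix q assume q: "q \<le> p"
      show "V q \<in> candp k q ?h'"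
      proof (cases "q = p")
        case True then show ?thesis using j by (auto simp: V_def candp_snoc p_def)
      next
        case False
        then have qp: "q < p" using q by simp
        have "candp k q h \<noteq> {}" using I qp pd by (simp add: InvD_def)
        then have "(SOME v. v \<in> candp k q h) \<in> candp k q h" by (simp add: some_in_eq)
        then show ?thesis using False qp by (simp add: V_def candp_snoc p_def)
      qed
    qed
    have V1k: "\<And>q. V q \<in> {1..k}"
    proof -
      fix q
      show "V q \<in> {1..k}"
      proof (cases "q \<le> p")
        case True then show ?thesis using Vc[OF True] candp_sub by blast
      next
        case False then show ?thesis using k by (simp add: V_def)
      qed
    qed
    define cs where "cs = map (\<lambda>q. V q - 1) [0..<d]"
    have Vk: "\<And>q. V q - 1 < k"
    proof -
      fix q
      have "1 \<le> V q" "V q \<le> k" using V1k[of q] by auto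
      then show "V q - 1 < k" by linarith
    qed
    have csk: "\<forall>c\<in>set cs. c < k" using Vk by (auto simp: cs_def)
    define e where "e = enc k cs"
    have en: "e < n" using enc_lt[OF csk] kd by (simp add: e_def cs_def)
    have edig: "\<And>q. q < d \<Longrightarrow> dig k q e + 1 = V q"
    proof -
      fix q assume q: "q < d"
      have "dig k q e = cs ! q" unfolding e_def by (rule enc_dig[OF csk]) (simp add: cs_def q)
      also have "\<dots> = V q - 1" using q by (simp add: cs_def)
      finally show "dig k q e + 1 = V q" using V1k[of q] by simp
    qed
    have c0: "cnt ?h' e = 0"
    proof (rule cnt_zero)
      fix \<tau> assume t: "\<tau> < length ?h'"
      define q where "q = \<tau> div k"
      have qp: "q \<le> p" unfolding q_def p_def using t by (simp add: div_le_mono)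
      have qd: "q < d" using qp pd by simp
      have x: "fst (?h' ! \<tau>) = Xd n k q" using I' t by (simp add: InvD_def q_def)
      have xe: "fst (?h' ! \<tau>) ! e = V q" using x en edig[OF qd] by (simp add: Xd_nth)
      have "V q \<in> candp k q ?h'" using Vc[OF qp] .
      then have "(V q = snd (snd (?h' ! \<tau>))) = fst (snd (?h' ! \<tau>))"
        unfolding candp_def using t q_def by blast
      then show "(fst (?h' ! \<tau>) ! e = snd (snd (?h' ! \<tau>))) = fst (snd (?h' ! \<tau>))" using xe by simp
    qed
    show ?thesis using realizable_intro[OF k InvD_wfh[OF I'] en] c0 k by simp
  qed
  show ?thesis unfolding goodc_def using ne rz by (simp add: p_def)
qed

definition Fd :: "nat \<Rightarrow> nat \<Rightarrow> hist \<Rightarrow> real" where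
  "Fd k d h = (if length h < d * k then real (d - length h div k - 1) * Gf k k +
      Gf (card (candp k (length h div k) h)) (k - length h mod k) else 0)"

lemma candp_vac: "(\<And>\<tau>. \<tau> < length h \<Longrightarrow> \<tau> div k \<noteq> q) \<Longrightarrow> candp k q h = {1..k}"
  unfolding candp_def by auto

lemma Fd_snoc:
  assumes k: "1 \<le> k" and l: "length h < d * k"
  shows "Fd k d (h @ [z]) = real (d - length h div k - 1) * Gf k k +
           Gf (card (candp k (length h div k) (h @ [z]))) (k - length h mod k - 1)"
proof -
  define ll where "ll = length h"
  define p where "p = ll div k"
  define t where "t = ll mod k"
  have tk: "t < k" using k by (simp add: t_def)
  have ell: "ll = p * k + t" by (simp add: p_def t_def)
  have pd: "p < d" using l k unfolding p_def ll_def by (simp add: div_less_iff_less_mult mult.commute)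
  obtain a b where z: "z = (a, b)" by (cases z)
  show ?thesis
  proof (cases "Suc t = k")
    case True
    have dv: "Suc ll div k = Suc p" "Suc ll mod k = 0"
      using True by (simp_all add: div_Suc mod_Suc p_def t_def)
    have cv: "candp k (Suc p) (h @ [z]) = {1..k}"
    proof (rule candp_vac)
      fix \<tau> assume "\<tau> < length (h @ [z])"
      then have "\<tau> \<le> ll" by (simp add: ll_def)
      then have "\<tau> div k \<le> p" unfolding p_def by (rule div_le_mono)
      then show "\<tau> div k \<noteq> Suc p" by simp
    qed
    have g0: "k - length h mod k - 1 = 0" using True by (simp add: ll_def[symmetric] t_def[symmetric])
    show ?thesis
    proof (cases "Suc ll < d * k")
      case True
      have "Suc p * k < d * k" using dv True ell tk \<open>Suc t = k\<close> by simp
      then have "Suc p < d" by (simp only: mult_less_cancel2)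
      then have p2: "Suc (Suc p) \<le> d" by simp
      have "Fd k d (h @ [z]) = real (d - Suc p - 1) * Gf k k + Gf k k"
        using True dv cv by (simp add: Fd_def ll_def)
      also have "\<dots> = real (d - p - 1) * Gf k k"
        using p2 by (simp add: of_nat_diff algebra_simps)
      finally show ?thesis using g0 by (simp add: p_def ll_def)
    next
      case False
      have "Suc ll = d * k" using False l by (simp add: ll_def)
      then have "Suc p * k = d * k" using ell \<open>Suc t = k\<close> by simp
      then have "Suc p = d" using k by (subst (asm) mult_right_cancel) auto
      then have "d = Suc p" by simp
      then show ?thesis using False g0 by (simp add: Fd_def ll_def p_def)
    qed
  next
    case False
    then have st: "Suc t < k" using tk by simp
    have dv: "Suc ll div k = p" "Suc ll mod k = Suc t"
      using False by (simp_all add: div_Suc mod_Suc p_def t_def)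
    have "Suc ll < d * k"
    proof -
      have "Suc ll < p * k + k" using ell st by simp
      also have "p * k + k = Suc p * k" by simp
      also have "\<dots> \<le> d * k" using pd by (intro mult_le_mono1) simp
      finally show ?thesis .
    qed
    then show ?thesis using dv by (simp add: Fd_def ll_def[symmetric] p_def t_def)
  qed
qed

lemma lowD:
  assumes k: "2 \<le> k" and kd: "k ^ d \<le> n" and Lv: "\<And>h x. set_pmf (L h x) \<subseteq> {1..k}"
  shows "InvD n k d h \<Longrightarrow> length h + T = d * k \<Longrightarrow> Fd k d h \<le> game_val L (axD n k) (labD n k r) T h"
proof (induction T arbitrary: h)
  case 0
  then show ?case by (simp add: Fd_def)
next
  case (Suc T)
  have I: "InvD n k d h" and l: "length h < d * k" using Suc.prems by auto
  define p where "p = length h div k"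
  define C where "C = candp k p h"
  define u where "u = card C"
  define m where "m = k - length h mod k"
  define base where "base = real (d - p - 1) * Gf k k"
  have pd: "p < d" using l k unfolding p_def by (simp add: div_less_iff_less_mult mult.commute)
  have Cne: "C \<noteq> {}" using I pd by (simp add: InvD_def C_def)
  have Cfin: "finite C" by (simp add: C_def candp_fin)
  have Csub: "C \<subseteq> {1..k}" unfolding C_def by (rule candp_sub)
  have u1: "1 \<le> u" using Cne Cfin by (simp add: u_def Suc_le_eq card_gt_0_iff)
  have "length h mod k < k" using k by simp
  then have m1: "1 \<le> m" by (simp add: m_def)
  have Fdh: "Fd k d h = base + Gf u m" using l by (simp add: Fd_def base_def p_def u_def C_def m_def)
  have gd: "goodc n k r h" by (rule InvD_goodc[OF k kd I l])
  let ?x = "axD n k h"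
  let ?\<pi> = "L h ?x"
  have lab: "labD n k r h ?\<pi> = pmf_of_set C" using gd by (simp add: labD_def C_def p_def)
  let ?F = "\<lambda>yh y. (if yh = y then 0 else 1) + game_val L (axD n k) (labD n k r) T (h @ [(?x, yh = y, yh)])"
  have IH: "\<And>yh y. y \<in> C \<Longrightarrow> yh \<in> {1..k} \<Longrightarrow>
      (if yh = y then 0 else 1) + base + Gf (card (candp k p (h @ [(?x, yh = y, yh)]))) (m - 1) \<le> ?F yh y"
  proof -
    fix yh y assume y: "y \<in> C" and yh: "yh \<in> {1..k}"
    have I': "InvD n k d (h @ [(?x, yh = y, yh)])" using InvD_snoc[OF I l _ yh, of y] y by (simp add: C_def p_def)
    have "Fd k d (h @ [(?x, yh = y, yh)]) \<le> game_val L (axD n k) (labD n k r) T (h @ [(?x, yh = y, yh)])"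
      using Suc.IH[OF I'] Suc.prems(2) by simp
    moreover have "Fd k d (h @ [(?x, yh = y, yh)]) = base + Gf (card (candp k p (h @ [(?x, yh = y, yh)]))) (m - 1)"
      using Fd_snoc[of k h d "(?x, yh = y, yh)"] k l by (simp add: base_def p_def m_def)
    ultimately show "(if yh = y then 0 else 1) + base + Gf (card (candp k p (h @ [(?x, yh = y, yh)]))) (m - 1) \<le> ?F yh y"
      by simp
  qed
  have cs: "\<And>yh y. candp k p (h @ [(?x, yh = y, yh)]) = {v\<in>C. (v = yh) = (yh = y)}"
    by (simp add: candp_snoc C_def p_def)
  have per: "\<And>yh. yh \<in> {1..k} \<Longrightarrow> base + Gf u m \<le> (\<Sum>y\<in>{1..k}. pmf (pmf_of_set C) y * ?F yh y)"
  proof -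
    fix yh assume yh: "yh \<in> {1..k}"
    have "(\<Sum>y\<in>{1..k}. pmf (pmf_of_set C) y * ?F yh y) = (\<Sum>y\<in>{1..k}. if y \<in> C then ?F yh y / real u else 0)"
      by (rule sum.cong) (auto simp: Cfin Cne u_def)
    also have "\<dots> = (\<Sum>y\<in>{1..k} \<inter> C. ?F yh y / real u)" by (rule sum.inter_restrict[symmetric]) simp
    also have "{1..k} \<inter> C = C" using Csub by auto
    finally have e: "(\<Sum>y\<in>{1..k}. pmf (pmf_of_set C) y * ?F yh y) = (\<Sum>y\<in>C. ?F yh y) / real u"
      by (simp add: sum_divide_distrib)
    show "base + Gf u m \<le> (\<Sum>y\<in>{1..k}. pmf (pmf_of_set C) y * ?F yh y)"
    proof (cases "yh \<in> C")
      case True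
      have c1: "candp k p (h @ [(?x, yh = yh, yh)]) = {yh}" using True cs[of yh yh] by auto
      have c2: "candp k p (h @ [(?x, yh = y, yh)]) = C - {yh}" if yy: "y \<noteq> yh" for y
      proof -
        have "candp k p (h @ [(?x, yh = y, yh)]) = {v\<in>C. (v = yh) = (yh = y)}" by (rule cs)
        also have "\<dots> = C - {yh}" using yy by auto
        finally show ?thesis .
      qed
      have cu: "card (C - {yh}) = u - 1" using True Cfin by (simp add: u_def)
      have "(\<Sum>y\<in>C. ?F yh y) = ?F yh yh + (\<Sum>y\<in>C - {yh}. ?F yh y)" by (rule sum.remove[OF Cfin True])
      moreover have "base \<le> ?F yh yh" using IH[OF True yh] c1 by simp
      moreover have "(\<Sum>y\<in>C - {yh}. 1 + base + Gf (u - 1) (m - 1)) \<le> (\<Sum>y\<in>C - {yh}. ?F yh y)"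
      proof (rule sum_mono)
        fix y assume y: "y \<in> C - {yh}"
        then have "y \<noteq> yh" by simp
        then show "1 + base + Gf (u - 1) (m - 1) \<le> ?F yh y" using IH[of y yh] y yh c2 cu by auto
      qed
      moreover have "(\<Sum>y\<in>C - {yh}. 1 + base + Gf (u - 1) (m - 1)) = (real u - 1) * (1 + base + Gf (u - 1) (m - 1))"
        using cu u1 by (simp add: of_nat_diff)
      ultimately have "base + (real u - 1) * (1 + base + Gf (u - 1) (m - 1)) \<le> (\<Sum>y\<in>C. ?F yh y)" by linarith
      then have A: "(base + (real u - 1) * (1 + base + Gf (u - 1) (m - 1))) / real u \<le> (\<Sum>y\<in>C. ?F yh y) / real u"
        using u1 by (intro divide_right_mono) auto
      have "(base + (real u - 1) * (1 + base + Gf (u - 1) (m - 1))) / real u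
            = base + ((real u - 1) / real u) * (1 + Gf (u - 1) (m - 1))"
        using u1 by (simp add: field_simps)
      moreover have "Gf u m \<le> ((real u - 1) / real u) * (1 + Gf (u - 1) (m - 1))"
        using Gf_G3[OF u1 m1] by simp
      ultimately show ?thesis using A e by simp
    next
      case False
      have c3: "candp k p (h @ [(?x, yh = y, yh)]) = C" if yy: "y \<in> C" for y
      proof -
        have "candp k p (h @ [(?x, yh = y, yh)]) = {v\<in>C. (v = yh) = (yh = y)}" by (rule cs)
        also have "\<dots> = C" using yy False by auto
        finally show ?thesis .
      qed
      have "(\<Sum>y\<in>C. 1 + base + Gf u (m - 1)) \<le> (\<Sum>y\<in>C. ?F yh y)"
      proof (rule sum_mono)
        fix y assume y: "y \<in> C"
        then have "y \<noteq> yh" using False by auto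
        then show "1 + base + Gf u (m - 1) \<le> ?F yh y" using IH[OF y yh] c3[OF y] by (simp add: u_def)
      qed
      then have "real u * (1 + base + Gf u (m - 1)) \<le> (\<Sum>y\<in>C. ?F yh y)" by (simp add: u_def)
      then have "(1 + base + Gf u (m - 1)) \<le> (\<Sum>y\<in>C. ?F yh y) / real u"
        using u1 by (simp add: field_simps)
      moreover have "Gf u m \<le> 1 + Gf u (m - 1)" by (rule Gf_G2[OF u1 m1])
      ultimately show ?thesis using e by simp
    qed
  qed
  have "game_val L (axD n k) (labD n k r) (Suc T) h = (\<Sum>yh\<in>{1..k}. \<Sum>y\<in>{1..k}. pmf ?\<pi> yh * pmf (labD n k r h ?\<pi>) y * ?F yh y)"
    by (rule gv_Suc_sum) (use Lv lab Csub Cfin Cne in auto)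
  also have "\<dots> = (\<Sum>yh\<in>{1..k}. pmf ?\<pi> yh * (\<Sum>y\<in>{1..k}. pmf (pmf_of_set C) y * ?F yh y))"
    unfolding lab by (simp add: sum_distrib_left mult.assoc)
  also have "\<dots> \<ge> (\<Sum>yh\<in>{1..k}. pmf ?\<pi> yh * (base + Gf u m))"
    by (rule sum_mono) (intro mult_left_mono per; simp)
  also have "(\<Sum>yh\<in>{1..k}. pmf ?\<pi> yh * (base + Gf u m)) = base + Gf u m"
    using sum_pmf_eq_1[of "{1..k}" ?\<pi>] Lv by (simp add: sum_distrib_right[symmetric])
  finally show ?case using Fdh by simp
qed


definition Yset :: "nat \<Rightarrow> nat \<Rightarrow> nat list set" where
  "Yset k d = {ys. length ys = d \<and> set ys \<subseteq> {1..k}}"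

definition LABo :: "nat \<Rightarrow> nat list \<Rightarrow> hist \<Rightarrow> nat pmf \<Rightarrow> nat pmf" where
  "LABo k ys h \<pi> = return_pmf (ys ! (length h div k))"

definition Cs :: "nat \<Rightarrow> nat \<Rightarrow> hist \<Rightarrow> nat list set" where
  "Cs k d h = {ys\<in>Yset k d. \<forall>\<tau><length h. (ys ! (\<tau> div k) = snd (snd (h ! \<tau>))) = fst (snd (h ! \<tau>))}"

lemma Yset_fin: "finite (Yset k d)"
proof -
  have "Yset k d = {ys. set ys \<subseteq> {1..k} \<and> length ys = d}" by (auto simp: Yset_def)
  then show ?thesis using finite_lists_length_eq[of "{1..k}" d] by simp
qed

lemma Cs_fin: "finite (Cs k d h)"
  by (rule finite_subset[OF _ Yset_fin]) (auto simp: Cs_def)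

lemma Cs_Nil: "Cs k d [] = Yset k d" by (simp add: Cs_def)

lemma Cs_snoc: "Cs k d (h @ [(x, c, yh)]) = {ys\<in>Cs k d h. (ys ! (length h div k) = yh) = c}"
  unfolding Cs_def by (auto simp: nth_append less_Suc_eq)

lemma Cs_cand:
  assumes "ys \<in> Cs k d h" "length h div k < d"
  shows "ys ! (length h div k) \<in> candp k (length h div k) h"
proof -
  have l: "length ys = d" and st: "set ys \<subseteq> {1..k}" using assms by (auto simp: Cs_def Yset_def)
  have "ys ! (length h div k) \<in> set ys" using assms(2) l by simp
  then have "ys ! (length h div k) \<in> {1..k}" using st by blast
  then show ?thesis using assms(1) by (auto simp: Cs_def candp_def)
qed

lemma Cs_swap_le:
  assumes v: "v \<in> candp k p h" and w: "w \<in> candp k p h" and p: "p = length h div k" and pd: "p < d"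
  shows "card {ys\<in>Cs k d h. ys ! p = v} \<le> card {ys\<in>Cs k d h. ys ! p = w}"
proof -
  let ?f = "\<lambda>ys. ys[p := w]"
  have inj: "inj_on ?f {ys\<in>Cs k d h. ys ! p = v}"
  proof (rule inj_onI)
    fix a b assume a: "a \<in> {ys\<in>Cs k d h. ys ! p = v}" and b: "b \<in> {ys\<in>Cs k d h. ys ! p = v}"
      and e: "a[p := w] = b[p := w]"
    have "a = a[p := w, p := v]" using a list_update_id[of a p] by auto
    also have "\<dots> = b[p := w, p := v]" using e by simp
    also have "\<dots> = b" using b list_update_id[of b p] by auto
    finally show "a = b" .
  qed
  have sub: "?f ` {ys\<in>Cs k d h. ys ! p = v} \<subseteq> {ys\<in>Cs k d h. ys ! p = w}"
  proof (rule image_subsetI)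
    fix ys assume "ys \<in> {ys\<in>Cs k d h. ys ! p = v}"
    then have ys: "ys \<in> Cs k d h" "ys ! p = v" by auto
    have len: "length ys = d" and st: "set ys \<subseteq> {1..k}" using ys(1) by (auto simp: Cs_def Yset_def)
    have w1: "w \<in> {1..k}" using w candp_sub by blast
    have "set (ys[p := w]) \<subseteq> {1..k}" using st w1 by (auto dest: subsetD[OF set_update_subset_insert])
    moreover have "\<forall>\<tau><length h. (ys[p := w] ! (\<tau> div k) = snd (snd (h ! \<tau>))) = fst (snd (h ! \<tau>))"
    proof (intro allI impI)
      fix \<tau> assume t: "\<tau> < length h"
      have tp: "\<tau> div k \<le> p" using t p by (simp add: div_le_mono)
      then have td: "\<tau> div k < length ys" using pd len by simp
      show "(ys[p := w] ! (\<tau> div k) = snd (snd (h ! \<tau>))) = fst (snd (h ! \<tau>))"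
      proof (cases "\<tau> div k = p")
        case True
        then show ?thesis using w t td by (auto simp: candp_def)
      next
        case False
        then show ?thesis using ys(1) t td by (auto simp: Cs_def)
      qed
    qed
    moreover have "ys[p := w] ! p = w" using pd len by simp
    ultimately show "ys[p := w] \<in> {ys\<in>Cs k d h. ys ! p = w}" using len by (simp add: Cs_def Yset_def)
  qed
  show ?thesis using card_inj_on_le[OF inj sub] Cs_fin by simp
qed

lemma Cs_card_part:
  assumes p: "p = length h div k" and pd: "p < d" and w: "w \<in> candp k p h"
  shows "real (card (Cs k d h)) = real (card (candp k p h)) * real (card {ys\<in>Cs k d h. ys ! p = w})"
proof -
  have "card (Cs k d h) = (\<Sum>ys\<in>Cs k d h. 1)" by simp
  also have "\<dots> = (\<Sum>v\<in>candp k p h. \<Sum>ys\<in>{ys\<in>Cs k d h. ys ! p = v}. 1)"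
    by (rule sum.group[symmetric]) (use Cs_fin candp_fin Cs_cand p pd in auto)
  also have "\<dots> = (\<Sum>v\<in>candp k p h. card {ys\<in>Cs k d h. ys ! p = w})"
  proof (rule sum.cong[OF refl])
    fix v assume v: "v \<in> candp k p h"
    have "card {ys\<in>Cs k d h. ys ! p = v} = card {ys\<in>Cs k d h. ys ! p = w}"
      using Cs_swap_le[OF v w p pd] Cs_swap_le[OF w v p pd] by simp
    then show "(\<Sum>ys\<in>{ys\<in>Cs k d h. ys ! p = v}. 1) = card {ys\<in>Cs k d h. ys ! p = w}" by simp
  qed
  also have "\<dots> = card (candp k p h) * card {ys\<in>Cs k d h. ys ! p = w}" by simp
  finally show ?thesis by (simp only: of_nat_mult[symmetric])
qed

lemma sum_retG:
  assumes "(y::nat) \<in> {1..(k::nat)}"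
  shows "(\<Sum>y'\<in>{1..k}. a * pmf (return_pmf y) y' * g y') = a * (g y :: real)"
proof -
  have "(\<Sum>y'\<in>{1..k}. a * pmf (return_pmf y) y' * g y') = (\<Sum>y'\<in>{1..k}. if y' = y then a * g y' else 0)"
    by (rule sum.cong) (auto simp: indicator_def)
  also have "\<dots> = a * g y" using assms by (subst sum.delta) auto
  finally show ?thesis .
qed

lemma lowO:
  assumes k: "2 \<le> k" and Lv: "\<And>h x. set_pmf (L h x) \<subseteq> {1..k}"
  shows "length h + T = d * k \<Longrightarrow>
     real (card (Cs k d h)) * Fd k d h \<le> (\<Sum>ys\<in>Cs k d h. game_val L (axD n k) (LABo k ys) T h)"
proof (induction T arbitrary: h)
  case 0
  then show ?case by (simp add: Fd_def)
next
  case (Suc T)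
  have l: "length h < d * k" using Suc.prems by simp
  define p where "p = length h div k"
  define C where "C = candp k p h"
  define u where "u = card C"
  define m where "m = k - length h mod k"
  define base where "base = real (d - p - 1) * Gf k k"
  define N where "N = real (card (Cs k d h))"
  have pd: "p < d" using l k unfolding p_def by (simp add: div_less_iff_less_mult mult.commute)
  have Cfin: "finite C" by (simp add: C_def candp_fin)
  have "length h mod k < k" using k by simp
  then have m1: "1 \<le> m" by (simp add: m_def)
  have Fdh: "Fd k d h = base + Gf u m" using l by (simp add: Fd_def base_def p_def u_def C_def m_def)
  let ?x = "axD n k h"
  let ?\<pi> = "L h ?x"
  show ?case
  proof (cases "Cs k d h = {}")
    case True then show ?thesis by simp
  next
    case Cne: False
    then obtain ys0 where ys0: "ys0 \<in> Cs k d h" by blast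
    have yC: "\<And>ys. ys \<in> Cs k d h \<Longrightarrow> ys ! p \<in> C" using Cs_cand pd by (simp add: C_def p_def)
    have Cne2: "C \<noteq> {}" using yC[OF ys0] by blast
    have u1: "1 \<le> u" using Cne2 Cfin by (simp add: u_def Suc_le_eq card_gt_0_iff)
    have spi: "(\<Sum>yh\<in>{1..k}. pmf ?\<pi> yh) = 1" by (rule sum_pmf_eq_1) (use Lv in auto)
    let ?G = "\<lambda>ys yh. (if yh = ys ! p then 0 else 1) + game_val L (axD n k) (LABo k ys) T (h @ [(?x, yh = ys ! p, yh)])"
    have gv: "\<And>ys. ys \<in> Cs k d h \<Longrightarrow> game_val L (axD n k) (LABo k ys) (Suc T) h = (\<Sum>yh\<in>{1..k}. pmf ?\<pi> yh * ?G ys yh)"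
    proof -
      fix ys assume ys: "ys \<in> Cs k d h"
      have y1k: "ys ! p \<in> {1..k}" using yC[OF ys] candp_sub[of k p h] by (auto simp: C_def)
      have lab: "LABo k ys h ?\<pi> = return_pmf (ys ! p)" by (simp add: LABo_def p_def)
      have "game_val L (axD n k) (LABo k ys) (Suc T) h = (\<Sum>yh\<in>{1..k}. \<Sum>y\<in>{1..k}. pmf ?\<pi> yh * pmf (LABo k ys h ?\<pi>) y *
          ((if yh = y then 0 else 1) + game_val L (axD n k) (LABo k ys) T (h @ [(?x, yh = y, yh)])))"
        by (rule gv_Suc_sum) (use Lv lab y1k in auto)
      also have "\<dots> = (\<Sum>yh\<in>{1..k}. pmf ?\<pi> yh * ?G ys yh)"
        unfolding lab by (rule sum.cong[OF refl]) (rule sum_retG[OF y1k])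
      finally show "game_val L (axD n k) (LABo k ys) (Suc T) h = (\<Sum>yh\<in>{1..k}. pmf ?\<pi> yh * ?G ys yh)" .
    qed
    have per: "N * Fd k d h \<le> (\<Sum>ys\<in>Cs k d h. ?G ys yh)" if yh: "yh \<in> {1..k}" for yh
    proof -
      define A where "A = {ys\<in>Cs k d h. ys ! p = yh}"
      define B where "B = {ys\<in>Cs k d h. ys ! p \<noteq> yh}"
      define hc where "hc = h @ [(?x, True, yh)]"
      define hw where "hw = h @ [(?x, False, yh)]"
      have CA: "Cs k d hc = A" unfolding hc_def A_def by (simp add: Cs_snoc p_def)
      have CB: "Cs k d hw = B" unfolding hw_def B_def by (simp add: Cs_snoc p_def)
      have AB: "A \<union> B = Cs k d h" "A \<inter> B = {}" by (auto simp: A_def B_def)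
      have Afin: "finite A" "finite B" using Cs_fin by (auto simp: A_def B_def)
      have cardAB: "real (card A) + real (card B) = N"
        using card_Un_disjoint[OF Afin AB(2)] AB(1) by (simp add: N_def)
      have GA: "\<And>ys. ys \<in> A \<Longrightarrow> ?G ys yh = game_val L (axD n k) (LABo k ys) T hc" by (simp add: A_def hc_def)
      have GB: "\<And>ys. ys \<in> B \<Longrightarrow> ?G ys yh = 1 + game_val L (axD n k) (LABo k ys) T hw"
      proof -
        fix ys assume "ys \<in> B"
        then have "yh \<noteq> ys ! p" by (auto simp: B_def)
        then show "?G ys yh = 1 + game_val L (axD n k) (LABo k ys) T hw" by (simp add: hw_def)
      qed
      have IA: "real (card A) * Fd k d hc \<le> (\<Sum>ys\<in>A. game_val L (axD n k) (LABo k ys) T hc)"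
        using Suc.IH[of hc] Suc.prems CA by (simp add: hc_def)
      have IB: "real (card B) * Fd k d hw \<le> (\<Sum>ys\<in>B. game_val L (axD n k) (LABo k ys) T hw)"
        using Suc.IH[of hw] Suc.prems CB by (simp add: hw_def)
      have "(\<Sum>ys\<in>Cs k d h. ?G ys yh) = (\<Sum>ys\<in>A. ?G ys yh) + (\<Sum>ys\<in>B. ?G ys yh)"
        using sum.union_disjoint[OF Afin AB(2)] AB(1) by simp
      also have "(\<Sum>ys\<in>A. ?G ys yh) = (\<Sum>ys\<in>A. game_val L (axD n k) (LABo k ys) T hc)" by (rule sum.cong) (simp_all add: GA)
      also have "(\<Sum>ys\<in>B. ?G ys yh) = real (card B) + (\<Sum>ys\<in>B. game_val L (axD n k) (LABo k ys) T hw)"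
        by (simp add: GB sum.distrib)
      finally have S: "real (card A) * Fd k d hc + real (card B) * (1 + Fd k d hw) \<le> (\<Sum>ys\<in>Cs k d h. ?G ys yh)"
        using IA IB by (simp add: algebra_simps)
      have Fc: "Fd k d hc = base + Gf (card (candp k p hc)) (m - 1)"
        using Fd_snoc[of k h d] k l by (simp add: hc_def base_def p_def m_def)
      have Fw: "Fd k d hw = base + Gf (card (candp k p hw)) (m - 1)"
        using Fd_snoc[of k h d] k l by (simp add: hw_def base_def p_def m_def)
      have N0: "0 \<le> N" by (simp add: N_def)
      show ?thesis
      proof (cases "yh \<in> C")
        case True
        have cc: "candp k p hc = {yh}" using True by (auto simp: hc_def candp_snoc p_def C_def)
        have cw: "candp k p hw = C - {yh}" by (auto simp: hw_def candp_snoc p_def C_def)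
        have cu: "card (C - {yh}) = u - 1" using True Cfin by (simp add: u_def)
        have cA: "N = real u * real (card A)"
          using Cs_card_part[of p h k d yh] True pd by (simp add: N_def A_def u_def C_def p_def)
        have cB: "real (card B) = N - real (card A)" using cardAB by simp
        have Fc': "Fd k d hc = base" using Fc cc by simp
        have Fw': "Fd k d hw = base + Gf (u - 1) (m - 1)" using Fw cw cu by simp
        have ur: "0 < real u" using u1 by simp
        have "real (card A) * Fd k d hc + real (card B) * (1 + Fd k d hw)
            = N * (base + ((real u - 1) / real u) * (1 + Gf (u - 1) (m - 1)))"
          unfolding Fc' Fw' cB using cA ur by (simp add: field_simps)
        moreover have "Gf u m \<le> ((real u - 1) / real u) * (1 + Gf (u - 1) (m - 1))"
          using Gf_G3[OF u1 m1] by simp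
        ultimately have "N * Fd k d h \<le> real (card A) * Fd k d hc + real (card B) * (1 + Fd k d hw)"
          unfolding Fdh using N0 by (simp add: mult_left_mono)
        then show ?thesis using S by linarith
      next
        case False
        have A0: "A = {}" using yC False by (auto simp: A_def)
        have cw: "candp k p hw = C" using False by (auto simp: hw_def candp_snoc p_def C_def)
        have cB: "real (card B) = N" using cardAB A0 by simp
        have "Gf u m \<le> 1 + Gf u (m - 1)" by (rule Gf_G2[OF u1 m1])
        then have "N * Fd k d h \<le> real (card B) * (1 + Fd k d hw)"
          unfolding Fdh cB using Fw cw N0 by (simp add: u_def mult_left_mono)
        then show ?thesis using S A0 by simp
      qed
    qed
    have "(\<Sum>ys\<in>Cs k d h. game_val L (axD n k) (LABo k ys) (Suc T) h) = (\<Sum>ys\<in>Cs k d h. \<Sum>yh\<in>{1..k}. pmf ?\<pi> yh * ?G ys yh)"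
      by (rule sum.cong[OF refl]) (rule gv)
    also have "\<dots> = (\<Sum>yh\<in>{1..k}. pmf ?\<pi> yh * (\<Sum>ys\<in>Cs k d h. ?G ys yh))"
      by (subst sum.swap) (simp add: sum_distrib_left)
    also have "\<dots> \<ge> (\<Sum>yh\<in>{1..k}. pmf ?\<pi> yh * (N * Fd k d h))"
      by (rule sum_mono) (intro mult_left_mono per; simp)
    also have "(\<Sum>yh\<in>{1..k}. pmf ?\<pi> yh * (N * Fd k d h)) = N * Fd k d h"
      using spi by (simp add: sum_distrib_right[symmetric])
    finally show ?thesis by (simp add: N_def)
  qed
qed

definition So :: "nat \<Rightarrow> nat \<Rightarrow> nat \<Rightarrow> nat list \<Rightarrow> (inst \<times> nat) list" where
  "So n k d ys = map (\<lambda>l. (Xd n k (l div k), ys ! (l div k))) [0..<d * k]"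

lemma So_nth: "l < d * k \<Longrightarrow> So n k d ys ! l = (Xd n k (l div k), ys ! (l div k))"
  by (simp add: So_def)

lemma So_inP:
  assumes k: "2 \<le> k" and kd: "k ^ d \<le> n" and ys: "ys \<in> Yset k d"
  shows "in_P n k r (So n k d ys)"
proof -
  have len: "length ys = d" and st: "set ys \<subseteq> {1..k}" using ys by (auto simp: Yset_def)
  have ysk: "\<And>q. q < d \<Longrightarrow> ys ! q \<in> {1..k}" using st len by (auto dest: nth_mem)
  have a: "\<forall>(x, y)\<in>set (So n k d ys). x \<in> instances n k \<and> y \<in> {1..k}"
  proof clarify
    fix x y assume "(x, y) \<in> set (So n k d ys)"
    then obtain l where l: "l < d * k" "x = Xd n k (l div k)" "y = ys ! (l div k)" by (auto simp: So_def)
    have "l div k < d" using l(1) k by (simp add: div_less_iff_less_mult mult.commute)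
    then show "x \<in> instances n k \<and> y \<in> {1..k}" using l Xd_inst[of k n] ysk k by simp
  qed
  define cs where "cs = map (\<lambda>y. y - 1) ys"
  have csk: "\<forall>c\<in>set cs. c < k"
  proof
    fix c assume "c \<in> set cs"
    then obtain y where "y \<in> set ys" "c = y - 1" by (auto simp: cs_def)
    then have "1 \<le> y" "y \<le> k" using st by auto
    then show "c < k" using \<open>c = y - 1\<close> by linarith
  qed
  define e where "e = enc k cs"
  have en: "e < n" using enc_lt[OF csk] kd len by (simp add: e_def cs_def)
  have "filter (\<lambda>(x, y). x ! e \<noteq> y) (So n k d ys) = []"
  proof (rule filter_False, clarify)
    fix x y assume "(x, y) \<in> set (So n k d ys)" "x ! e \<noteq> y"
    then obtain l where l: "l < d * k" "x = Xd n k (l div k)" "y = ys ! (l div k)" and ne: "x ! e \<noteq> y"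
      by (auto simp: So_def)
    have q: "l div k < d" using l(1) k by (simp add: div_less_iff_less_mult mult.commute)
    have "dig k (l div k) e = cs ! (l div k)" unfolding e_def by (rule enc_dig[OF csk]) (simp add: cs_def len q)
    then have "x ! e = ys ! (l div k)" using l en q ysk[OF q] by (simp add: Xd_nth cs_def len)
    then show False using ne l by simp
  qed
  then show ?thesis using a en unfolding in_P_def by auto
qed

lemma obl_eq: "obl_val L (So n k d ys) = game_val L (axD n k) (LABo k ys) (d * k) []"
proof -
  have len: "length (So n k d ys) = d * k" by (simp add: So_def)
  have "game_val L (\<lambda>h. fst (So n k d ys ! length h)) (\<lambda>h \<pi>. return_pmf (snd (So n k d ys ! length h))) (d * k) []
      = game_val L (axD n k) (LABo k ys) (d * k) []"
    by (rule gv_cong[where N = "d * k"]) (auto simp: So_nth axD_def LABo_def fun_eq_iff)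
  then show ?thesis unfolding obl_val_def len .
qed

lemma obl_exists:
  assumes k: "2 \<le> k" and d: "1 \<le> d" and Lv: "\<And>h x. set_pmf (L h x) \<subseteq> {1..k}"
  shows "\<exists>ys\<in>Yset k d. real d * Gf k k \<le> obl_val L (So n k d ys)"
proof (rule ccontr)
  assume "\<not> ?thesis"
  then have lt: "\<And>ys. ys \<in> Yset k d \<Longrightarrow> obl_val L (So n k d ys) < real d * Gf k k" by auto
  have ne: "Yset k d \<noteq> {}"
  proof -
    have "replicate d 1 \<in> Yset k d" using k by (auto simp: Yset_def)
    then show ?thesis by blast
  qed
  have Fd0: "Fd k d [] = real d * Gf k k"
  proof -
    have "0 < d * k" using d k by simp
    then have "Fd k d [] = real (d - 1) * Gf k k + Gf (card (candp k 0 [])) k" by (simp add: Fd_def)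
    also have "card (candp k 0 []) = k" by (simp add: candp_Nil)
    finally show ?thesis using d by (simp add: of_nat_diff algebra_simps)
  qed
  have "real (card (Cs k d [])) * Fd k d [] \<le> (\<Sum>ys\<in>Cs k d []. game_val L (axD n k) (LABo k ys) (d * k) [])"
    by (rule lowO[OF k Lv]) simp
  also have "\<dots> = (\<Sum>ys\<in>Yset k d. obl_val L (So n k d ys))" by (simp add: Cs_Nil obl_eq)
  also have "\<dots> < (\<Sum>ys\<in>Yset k d. real d * Gf k k)"
    by (rule sum_strict_mono[OF Yset_fin ne lt])
  also have "\<dots> = real (card (Cs k d [])) * Fd k d []" by (simp add: Cs_Nil Fd0)
  finally show False by simp
qed


lemma Lup_valid: "2 \<le> k \<Longrightarrow> valid_learner k (Lup n k)"
  unfolding valid_learner_def using set_pmf_Lup by blast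

lemma upper_adap:
  assumes k: "2 \<le> k" and n: "0 < n" and v: "valid_adap_adv n k r ax lab"
  shows "game_val (Lup n k) ax lab T [] \<le> Psi n k r []"
proof (rule upper_gen[where R = "realizable n k r" and N = T, OF k n])
  fix h assume "realizable n k r h"
  then show "\<exists>i<n. cnt h i \<le> r" using realizable_imp by blast
next
  fix h assume R: "realizable n k r h" and "length h < T"
  show "ax h \<in> instances n k \<and> set_pmf (lab h (Lup n k h (ax h))) \<subseteq> {1..k} \<and>
        (\<forall>y\<in>set_pmf (lab h (Lup n k h (ax h))). \<forall>yh\<in>{1..k}. realizable n k r (h @ [(ax h, yh = y, yh)]))"
    using v R unfolding valid_adap_adv_def by blast
next
  show "realizable n k r []" using realizable_intro[OF k _ n] by simp
qed simp

lemma upper_obl: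
  assumes k: "2 \<le> k" and n: "0 < n" and S: "in_P n k r S"
  shows "obl_val (Lup n k) S \<le> Psi n k r []"
  unfolding obl_val_def
proof (rule upper_gen[where R = "\<lambda>h. length h \<le> length S \<and> (\<forall>t<length h. fst (h ! t) = fst (S ! t) \<and>
      (fst (snd (h ! t)) = (snd (snd (h ! t)) = snd (S ! t))))" and N = "length S", OF k n])
  fix h assume R: "length h \<le> length S \<and> (\<forall>t<length h. fst (h ! t) = fst (S ! t) \<and>
      (fst (snd (h ! t)) = (snd (snd (h ! t)) = snd (S ! t))))"
  obtain i where i: "i < n" "length (filter (\<lambda>(x, y). x ! i \<noteq> y) S) \<le> r" using S unfolding in_P_def by blast
  have "cnt h i \<le> length (filter (\<lambda>(x, y). x ! i \<noteq> y) S)"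
  proof -
    have "cnt h i = card {t. t < length h \<and> (case h ! t of (x, c, yh) \<Rightarrow> charged x c yh i)}" by (rule cnt_card)
    also have "\<dots> \<le> card {t. t < length S \<and> (case S ! t of (x, y) \<Rightarrow> x ! i \<noteq> y)}"
    proof (rule card_mono)
      show "finite {t. t < length S \<and> (case S ! t of (x, y) \<Rightarrow> x ! i \<noteq> y)}" by simp
      show "{t. t < length h \<and> (case h ! t of (x, c, yh) \<Rightarrow> charged x c yh i)}
            \<subseteq> {t. t < length S \<and> (case S ! t of (x, y) \<Rightarrow> x ! i \<noteq> y)}"
      proof
        fix t assume "t \<in> {t. t < length h \<and> (case h ! t of (x, c, yh) \<Rightarrow> charged x c yh i)}"
        then have t: "t < length h" and ch: "case h ! t of (x, c, yh) \<Rightarrow> charged x c yh i" by auto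
        obtain x c yh where ht: "h ! t = (x, c, yh)" by (cases "h ! t") auto
        obtain x' y where St: "S ! t = (x', y)" by (cases "S ! t") auto
        have e: "x = x'" "c = (yh = y)" using R t ht St by (metis fst_conv snd_conv)+
        have "x' ! i \<noteq> y" using ch ht e unfolding charged_def by auto
        then show "t \<in> {t. t < length S \<and> (case S ! t of (x, y) \<Rightarrow> x ! i \<noteq> y)}" using St t R by auto
      qed
    qed
    also have "\<dots> = length (filter (\<lambda>(x, y). x ! i \<noteq> y) S)" by (simp add: length_filter_conv_card)
    finally show ?thesis .
  qed
  then show "\<exists>i<n. cnt h i \<le> r" using i by auto
next
  fix h assume R: "length h \<le> length S \<and> (\<forall>t<length h. fst (h ! t) = fst (S ! t) \<and>
      (fst (snd (h ! t)) = (snd (snd (h ! t)) = snd (S ! t))))" and l: "length h < length S"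
  have mem: "S ! length h \<in> set S" using l by simp
  then have xy: "fst (S ! length h) \<in> instances n k" "snd (S ! length h) \<in> {1..k}"
    using S unfolding in_P_def by auto
  show "fst (S ! length h) \<in> instances n k \<and>
        set_pmf (return_pmf (snd (S ! length h))) \<subseteq> {1..k} \<and>
        (\<forall>y\<in>set_pmf (return_pmf (snd (S ! length h))). \<forall>yh\<in>{1..k}.
           length (h @ [(fst (S ! length h), yh = y, yh)]) \<le> length S \<and>
           (\<forall>t<length (h @ [(fst (S ! length h), yh = y, yh)]).
               fst ((h @ [(fst (S ! length h), yh = y, yh)]) ! t) = fst (S ! t) \<and>
               fst (snd ((h @ [(fst (S ! length h), yh = y, yh)]) ! t)) =
               (snd (snd ((h @ [(fst (S ! length h), yh = y, yh)]) ! t)) = snd (S ! t))))"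
    using xy R l by (auto simp: nth_append less_Suc_eq)
qed simp_all

lemma opt_adap_upper:
  assumes k: "2 \<le> k" and n: "0 < n"
  shows "opt_bandit_adap n k r \<le> ereal (Psi n k r [])"
proof -
  have "opt_bandit_adap n k r \<le> (SUP A \<in> {(ax, lab, T). valid_adap_adv n k r ax lab}.
          ereal (case A of (ax, lab, T) \<Rightarrow> game_val (Lup n k) ax lab T []))"
    unfolding opt_bandit_adap_def by (rule INF_lower) (simp add: Lup_valid[OF k])
  also have "\<dots> \<le> ereal (Psi n k r [])"
  proof (rule SUP_least)
    fix A assume "A \<in> {(ax, lab, T::nat). valid_adap_adv n k r ax lab}"
    then obtain ax0 lab0 T0 where A: "A = (ax0, lab0, T0)" "valid_adap_adv n k r ax0 lab0" by auto
    show "ereal (case A of (ax, lab, T) \<Rightarrow> game_val (Lup n k) ax lab T []) \<le> ereal (Psi n k r [])"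
      using upper_adap[OF k n A(2)] A(1) by simp
  qed
  finally show ?thesis .
qed

lemma opt_obl_upper:
  assumes k: "2 \<le> k" and n: "0 < n"
  shows "opt_bandit_obl n k r \<le> ereal (Psi n k r [])"
proof -
  have "opt_bandit_obl n k r \<le> (SUP S \<in> {S. in_P n k r S}. ereal (obl_val (Lup n k) S))"
    unfolding opt_bandit_obl_def by (rule INF_lower) (simp add: Lup_valid[OF k])
  also have "\<dots> \<le> ereal (Psi n k r [])"
    by (rule SUP_least) (use upper_obl[OF k n] in simp)
  finally show ?thesis .
qed

lemma PsiR_Nil: "1 \<le> k \<Longrightarrow> PsiR k r [] = (real k - 1) * (real r + 1)"
proof -
  assume k: "1 \<le> k"
  have "PhiR k r [] - real (Suc r) = (real k - 1) * (real r + 1)" by (simp add: PhiR_def algebra_simps)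
  moreover have "0 \<le> (real k - 1) * (real r + 1)" using k by simp
  ultimately show ?thesis by (simp add: PsiR_def)
qed

lemma opt_adap_lower:
  assumes k: "2 \<le> k" and kn: "k \<le> n" and d: "1 \<le> d" and kd: "k ^ d \<le> n"
  shows "ereal (max (real d * Gf k k) ((1/6) * ((real k - 1) * (real r + 1)))) \<le> opt_bandit_adap n k r"
  unfolding opt_bandit_adap_def
proof (rule INF_greatest)
  fix L assume "L \<in> {L. valid_learner k L}"
  then have Lv: "\<And>h x. set_pmf (L h x) \<subseteq> {1..k}" by (simp add: valid_learner_def)
  let ?S = "SUP A \<in> {(ax, lab, T). valid_adap_adv n k r ax lab}. ereal (case A of (ax, lab, T) \<Rightarrow> game_val L ax lab T [])"
  have a1: "ereal (real d * Gf k k) \<le> ?S"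
  proof (rule SUP_upper2[where i = "(axD n k, labD n k r, d * k)"])
    show "(axD n k, labD n k r, d * k) \<in> {(ax, lab, T). valid_adap_adv n k r ax lab}"
      using valid_D[OF k] by simp
    have I: "InvD n k d []" using k by (simp add: InvD_Nil)
    have "Fd k d [] \<le> game_val L (axD n k) (labD n k r) (d * k) []"
      by (rule lowD[OF k kd, of L, OF Lv I]) simp
    moreover have "Fd k d [] = real d * Gf k k"
    proof -
      have "0 < d * k" using d k by simp
      then have "Fd k d [] = real (d - 1) * Gf k k + Gf (card (candp k 0 [])) k" by (simp add: Fd_def)
      also have "card (candp k 0 []) = k" by (simp add: candp_Nil)
      finally show ?thesis using d by (simp add: of_nat_diff algebra_simps)
    qed
    ultimately show "ereal (real d * Gf k k) \<le> ereal (case (axD n k, labD n k r, d * k) of (ax, lab, T) \<Rightarrow> game_val L ax lab T [])"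
      by simp
  qed
  have a2: "ereal ((1/6) * ((real k - 1) * (real r + 1))) \<le> ?S"
  proof (rule SUP_upper2[where i = "(\<lambda>h. Xr n k, labR k r, (k - 1) * (r + 1))"])
    show "(\<lambda>h. Xr n k, labR k r, (k - 1) * (r + 1)) \<in> {(ax, lab, T). valid_adap_adv n k r ax lab}"
      using valid_R[OF k kn] by simp
    have "(1/6) * min (PsiR k r []) (real ((k - 1) * (r + 1))) \<le> game_val L (\<lambda>h. Xr n k) (labR k r) ((k - 1) * (r + 1)) []"
      by (rule lowR[OF k kn, of L, OF Lv])
    moreover have "min (PsiR k r []) (real ((k - 1) * (r + 1))) = (real k - 1) * (real r + 1)"
    proof -
      have a: "real (k - 1) = real k - 1" using k by (simp add: of_nat_diff)
      have "real ((k - 1) * (r + 1)) = real (k - 1) * real (r + 1)" by (rule of_nat_mult)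
      then have "real ((k - 1) * (r + 1)) = (real k - 1) * (real r + 1)" unfolding a by simp
      then show ?thesis using k by (simp add: PsiR_Nil)
    qed
    ultimately show "ereal ((1/6) * ((real k - 1) * (real r + 1))) \<le>
        ereal (case (\<lambda>h. Xr n k, labR k r, (k - 1) * (r + 1)) of (ax, lab, T) \<Rightarrow> game_val L ax lab T [])"
      by simp
  qed
  show "ereal (max (real d * Gf k k) ((1/6) * ((real k - 1) * (real r + 1)))) \<le> ?S"
    using a1 a2 by (simp add: max_def)
qed

lemma opt_obl_lower:
  assumes k: "2 \<le> k" and d: "1 \<le> d" and kd: "k ^ d \<le> n"
  shows "ereal (real d * Gf k k) \<le> opt_bandit_obl n k r"
  unfolding opt_bandit_obl_def
proof (rule INF_greatest)
  fix L assume "L \<in> {L. valid_learner k L}"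
  then have Lv: "\<And>h x. set_pmf (L h x) \<subseteq> {1..k}" by (simp add: valid_learner_def)
  obtain ys where ys: "ys \<in> Yset k d" "real d * Gf k k \<le> obl_val L (So n k d ys)"
    using obl_exists[OF k d, of L n, OF Lv] by blast
  show "ereal (real d * Gf k k) \<le> (SUP S \<in> {S. in_P n k r S}. ereal (obl_val L S))"
    by (rule SUP_upper2[where i = "So n k d ys"]) (use So_inP[OF k kd ys(1)] ys(2) in auto)
qed

lemma d_exists:
  assumes k: "2 \<le> k" and kn: "k \<le> n"
  shows "\<exists>d. 1 \<le> d \<and> k ^ d \<le> n \<and> log (real k) (real n) < real d + 1"
proof -
  define L where "L = log (real k) (real n)"
  have k1: "1 < real k" using k by simp
  have n0: "0 < real n" using k kn by simp
  have L1: "1 \<le> L"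
  proof -
    have "log (real k) (real k) \<le> log (real k) (real n)" using k1 kn by (subst log_le_cancel_iff) auto
    then show ?thesis using k1 by (simp add: L_def)
  qed
  define d where "d = nat \<lfloor>L\<rfloor>"
  have fl: "real d = of_int \<lfloor>L\<rfloor>" using L1 by (simp add: d_def)
  have dL: "real d \<le> L" using fl by simp
  have Ld: "L < real d + 1" using fl by linarith
  have d1: "1 \<le> d" using L1 by (simp add: d_def le_nat_iff)
  have "real k ^ d = real k powr real d" using k1 by (simp add: powr_realpow)
  also have "\<dots> \<le> real k powr L" using k1 dL by (simp add: powr_le_cancel_iff)
  also have "\<dots> = real n" using k1 n0 by (simp add: L_def)
  finally have "real (k ^ d) \<le> real n" by simp
  then have "k ^ d \<le> n" by linarith
  then show ?thesis using d1 Ld L_def by blast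
qed

lemma Psi_Nil_eq:
  assumes k: "2 \<le> k"
  shows "Psi n k r [] = 12 * real k * log (real k) (real n) + 36 * real k * real r"
proof -
  have lk: "0 < ln (real k)" using k by simp
  show ?thesis using lk unfolding Psi_Nil[OF k] Dk_def log_def by (simp add: field_simps)
qed

lemma arith_low:
  fixes k L d :: real
  assumes k: "2 \<le> k" and L: "0 \<le> L" and d: "1 \<le> d" and Ld: "L < d + 1"
  shows "k * L / 8 \<le> d * ((k - 1) / 2)"
proof -
  have "L \<le> 2 * d" using Ld d by linarith
  moreover have "k \<le> 2 * (k - 1)" using k by (simp add: algebra_simps)
  ultimately have "k * L \<le> (2 * (k - 1)) * (2 * d)" using k L d by (intro mult_mono) auto
  then show ?thesis by (simp add: algebra_simps)
qed

lemma part1: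
  assumes k: "2 \<le> k" and kn: "k \<le> n"
  shows "ereal (1/24 * real k * (log (real k) (real n) + real r)) \<le> opt_bandit_adap n k r \<and>
         opt_bandit_adap n k r \<le> ereal (36 * real k * (log (real k) (real n) + real r))"
proof
  have n0: "0 < n" using k kn by simp
  define L where "L = log (real k) (real n)"
  have L0: "0 \<le> L"
  proof -
    have "log (real k) (real k) \<le> log (real k) (real n)" using k kn by (subst log_le_cancel_iff) auto
    then show ?thesis using k by (simp add: L_def)
  qed
  obtain d where d: "1 \<le> d" "k ^ d \<le> n" "L < real d + 1" using d_exists[OF k kn] L_def by blast
  have "opt_bandit_adap n k r \<le> ereal (Psi n k r [])" by (rule opt_adap_upper[OF k n0])
  also have "Psi n k r [] = 12 * real k * L + 36 * real k * real r" using Psi_Nil_eq[OF k] by (simp add: L_def)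
  also have "\<dots> \<le> 36 * real k * (L + real r)" using L0 by (simp add: algebra_simps)
  finally show "opt_bandit_adap n k r \<le> ereal (36 * real k * (log (real k) (real n) + real r))"
    by (simp add: L_def)
  have Gk: "Gf k k = (real k - 1) / 2" using k by (simp add: Gf_kk)
  have A: "real k * L / 8 \<le> real d * Gf k k" unfolding Gk
    by (rule arith_low) (use k L0 d in auto)
  have B: "real k * real r / 12 \<le> (1/6) * ((real k - 1) * (real r + 1))"
  proof -
    have k2: "2 \<le> real k" using k by simp
    then have "real k \<le> 2 * (real k - 1)" by (simp add: algebra_simps)
    then have "real k * real r \<le> 2 * (real k - 1) * real r" by (intro mult_right_mono) auto
    then have kr: "2 * real r \<le> real k * real r" by (simp add: algebra_simps)
    have e: "(1/6) * ((real k - 1) * (real r + 1)) = (real k * real r + real k - real r - 1) / 6"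
      by (simp add: algebra_simps)
    have "real k * real r \<le> 2 * (real k * real r + real k - real r - 1)" using kr k2 by (simp add: algebra_simps)
    then show ?thesis unfolding e by (simp add: field_simps)
  qed
  have "1/24 * real k * (L + real r) \<le> max (real d * Gf k k) ((1/6) * ((real k - 1) * (real r + 1)))"
  proof -
    define a where "a = real d * Gf k k"
    define b where "b = (1/6) * ((real k - 1) * (real r + 1))"
    have a0: "0 \<le> a" using A L0 k by (simp add: a_def) (smt (verit) mult_nonneg_nonneg of_nat_0_le_iff)
    have b0: "0 \<le> b" using k by (simp add: b_def)
    have e: "1/24 * real k * (L + real r) = (1/3) * (real k * L / 8) + (1/2) * (real k * real r / 12)"
      by (simp add: algebra_simps)
    have "(1/3) * (real k * L / 8) + (1/2) * (real k * real r / 12) \<le> (1/3) * a + (1/2) * b"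
      using A B unfolding a_def b_def by linarith
    also have "\<dots> \<le> max a b" using a0 b0 by (simp add: max_def)
    finally show ?thesis unfolding e a_def b_def .
  qed
  then have "ereal (1/24 * real k * (L + real r)) \<le> ereal (max (real d * Gf k k) ((1/6) * ((real k - 1) * (real r + 1))))"
    by (simp only: ereal_less_eq(3))
  also have "\<dots> \<le> opt_bandit_adap n k r" by (rule opt_adap_lower[OF k kn d(1) d(2)])
  finally show "ereal (1/24 * real k * (log (real k) (real n) + real r)) \<le> opt_bandit_adap n k r"
    by (simp add: L_def)
qed

lemma part2:
  assumes C0: "0 < C0" and k: "2 \<le> k" and kn: "k \<le> n" and rC: "real r \<le> C0 * log (real k) (real n)"
  shows "ereal (1/8 * real k * log (real k) (real n)) \<le> opt_bandit_obl n k r \<and>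
         opt_bandit_obl n k r \<le> ereal ((12 + 36 * C0) * real k * log (real k) (real n))"
proof
  have n0: "0 < n" using k kn by simp
  define L where "L = log (real k) (real n)"
  have L0: "0 \<le> L"
  proof -
    have "log (real k) (real k) \<le> log (real k) (real n)" using k kn by (subst log_le_cancel_iff) auto
    then show ?thesis using k by (simp add: L_def)
  qed
  obtain d where d: "1 \<le> d" "k ^ d \<le> n" "L < real d + 1" using d_exists[OF k kn] L_def by blast
  have "opt_bandit_obl n k r \<le> ereal (Psi n k r [])" by (rule opt_obl_upper[OF k n0])
  also have "Psi n k r [] = 12 * real k * L + 36 * real k * real r" using Psi_Nil_eq[OF k] by (simp add: L_def)
  also have "\<dots> \<le> (12 + 36 * C0) * real k * L"
  proof -
    have "real k * real r \<le> real k * (C0 * L)" using rC k by (intro mult_left_mono) (auto simp: L_def)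
    then show ?thesis by (simp add: algebra_simps)
  qed
  finally show "opt_bandit_obl n k r \<le> ereal ((12 + 36 * C0) * real k * log (real k) (real n))"
    by (simp add: L_def)
  have Gk: "Gf k k = (real k - 1) / 2" using k by (simp add: Gf_kk)
  have A: "real k * L / 8 \<le> real d * Gf k k" unfolding Gk
    by (rule arith_low) (use k L0 d in auto)
  then have "ereal (1/8 * real k * L) \<le> ereal (real d * Gf k k)" by simp
  also have "\<dots> \<le> opt_bandit_obl n k r" by (rule opt_obl_lower[OF k d(1) d(2)])
  finally show "ereal (1/8 * real k * log (real k) (real n)) \<le> opt_bandit_obl n k r"
    by (simp add: L_def)
qed

theorem theorem4p12:
  shows "(\<exists>c C::real. 0 < c \<and> c \<le> C \<and>
            (\<forall>n k r::nat. 2 \<le> k \<and> k \<le> n \<longrightarrow>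
               ereal (c * real k * (log (real k) (real n) + real r)) \<le> opt_bandit_adap n k r \<and>
               opt_bandit_adap n k r \<le> ereal (C * real k * (log (real k) (real n) + real r))))
       \<and> (\<forall>C0::real. C0 > 0 \<longrightarrow>
            (\<exists>c' C'::real. 0 < c' \<and> c' \<le> C' \<and>
               (\<forall>n k r::nat. 2 \<le> k \<and> k \<le> n \<and> real r \<le> C0 * log (real k) (real n) \<longrightarrow>
                  ereal (c' * real k * log (real k) (real n)) \<le> opt_bandit_obl n k r \<and>
                  opt_bandit_obl n k r \<le> ereal (C' * real k * log (real k) (real n)))))"
proof (intro conjI)
  have "(0::real) < 1/24 \<and> (1/24::real) \<le> 36 \<and>
            (\<forall>n k r::nat. 2 \<le> k \<and> k \<le> n \<longrightarrow>
               ereal (1/24 * real k * (log (real k) (real n) + real r)) \<le> opt_bandit_adap n k r \<and>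
               opt_bandit_adap n k r \<le> ereal (36 * real k * (log (real k) (real n) + real r)))"
    using part1 by simp
  then show "\<exists>c C::real. 0 < c \<and> c \<le> C \<and>
            (\<forall>n k r::nat. 2 \<le> k \<and> k \<le> n \<longrightarrow>
               ereal (c * real k * (log (real k) (real n) + real r)) \<le> opt_bandit_adap n k r \<and>
               opt_bandit_adap n k r \<le> ereal (C * real k * (log (real k) (real n) + real r)))"
    by blast
next
  show "\<forall>C0::real. C0 > 0 \<longrightarrow>
            (\<exists>c' C'::real. 0 < c' \<and> c' \<le> C' \<and>
               (\<forall>n k r::nat. 2 \<le> k \<and> k \<le> n \<and> real r \<le> C0 * log (real k) (real n) \<longrightarrow>
                  ereal (c' * real k * log (real k) (real n)) \<le> opt_bandit_obl n k r \<and>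
                  opt_bandit_obl n k r \<le> ereal (C' * real k * log (real k) (real n))))"
  proof (intro allI impI)
    fix C0 :: real assume C0: "C0 > 0"
    have "(0::real) < 1/8 \<and> (1/8::real) \<le> 12 + 36 * C0 \<and>
               (\<forall>n k r::nat. 2 \<le> k \<and> k \<le> n \<and> real r \<le> C0 * log (real k) (real n) \<longrightarrow>
                  ereal (1/8 * real k * log (real k) (real n)) \<le> opt_bandit_obl n k r \<and>
                  opt_bandit_obl n k r \<le> ereal ((12 + 36 * C0) * real k * log (real k) (real n)))"
      using part2[OF C0] C0 by simp
    then show "\<exists>c' C'::real. 0 < c' \<and> c' \<le> C' \<and>
               (\<forall>n k r::nat. 2 \<le> k \<and> k \<le> n \<and> real r \<le> C0 * log (real k) (real n) \<longrightarrow>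
                  ereal (c' * real k * log (real k) (real n)) \<le> opt_bandit_obl n k r \<and>
                  opt_bandit_obl n k r \<le> ereal (C' * real k * log (real k) (real n)))"
      by blast
  qed
qed


end
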